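(* Let $b_1,\dots,b_g,c_1,\dots,c_g\in\mathbb{C}$ be such that all the quantities $b_j\pm b_k$, $c_j\pm c_k$ ($j\ne k$), $b_j\pm c_k$ (all $j,k$) that appear below are nonzero. Define, for $j\ne k$, $$C^B_{j,k}=\frac{(b_j-b_k)(c_j-c_k)(b_j+c_k)(c_j+b_k)}{(b_j-c_k)(c_j-b_k)(b_j+b_k)(c_j+c_k)}.$$ Let $\xi_1,\dots,\xi_{2g}\in\mathbb{C}$ and set $w_k=e^{\xi_{2k-1}+\xi_{2k}}\frac{b_k+c_k}{b_k-c_k}$ for $1\le k\le g$. Set $q_{2n-1}=b_n$, $q_{2n}=-c_n$ ($1\le n\le g$), and let $c_{j,k}=-c_{k,j}$ be the constants with $c_{2n-1,2n}=1$ for $1\le n\le g$ and $c_{j,k}=0$ for all other $j<k$. Then $$\sum_{\mathbf m\in\{0,1\}^g}\prod_{j<k}\big(C^B_{j,k}\big)^{m_jm_k}\prod_{k=1}^g w_k^{m_k}=\mathrm{Pf}\Big(c_{j,k}+\frac{q_j-q_k}{q_j+q_k}e^{\xi_j+\xi_k}\Big)_{1\le j,k\le 2g},$$ the Pfaffian of the $2g\times 2g$ skew-symmetric matrix with the displayed entries for $j<k$. (The left side is the Prym $M$-theta function $\tilde\vartheta^B_g(\mathbf z;\tilde\Omega^B)=\sum_{\mathbf m}\exp 2\pi i(\sum_{j<k}m_jm_k\tilde\Omega^B_{j,k}+\sum_k m_kz_k)$ with $e^{2\pi i\tilde\Omega^B_{j,k}}=C^B_{j,k}$ and $2\pi i z_k=\xi_{2k-1}+\xi_{2k}+\ln\frac{b_k+c_k}{b_k-c_k}$.)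 *)

theory Defs
  imports "HOL-Analysis.Analysis" "HOL-Combinatorics.Permutations" "HOL-Library.FuncSet"
begin

definition pfaffian :: "nat \<Rightarrow> (nat \<Rightarrow> nat \<Rightarrow> complex) \<Rightarrow> complex" where
  "pfaffian n A =
     (\<Sum>\<sigma> | \<sigma> permutes {1..2*n}.
        of_int (sign \<sigma>) * (\<Prod>i=1..n. A (\<sigma> (2*i - 1)) (\<sigma> (2*i))))
     / (2 ^ n * fact n)"

definition skew_from_upper :: "(nat \<Rightarrow> nat \<Rightarrow> complex) \<Rightarrow> nat \<Rightarrow> nat \<Rightarrow> complex" where
  "skew_from_upper E j k = (if j < k then E j k else if k < j then - E k j else 0)"

definition cconst :: "nat \<Rightarrow> nat \<Rightarrow> complex" where
  "cconst j k = (if odd j \<and> k = j + 1 then 1 else 0)"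

definition CB :: "(nat \<Rightarrow> complex) \<Rightarrow> (nat \<Rightarrow> complex) \<Rightarrow> nat \<Rightarrow> nat \<Rightarrow> complex" where
  "CB b c j k =
     ((b j - b k) * (c j - c k) * (b j + c k) * (c j + b k)) /
     ((b j - c k) * (c j - b k) * (b j + b k) * (c j + c k))"

definition qseq :: "(nat \<Rightarrow> complex) \<Rightarrow> (nat \<Rightarrow> complex) \<Rightarrow> nat \<Rightarrow> complex" where
  "qseq b c j = (if odd j then b ((j + 1) div 2) else - c (j div 2))"

end

theory Submission
  imports Defs "Jordan_Normal_Form.Determinant" "HOL-Computational_Algebra.Polynomial"
begin


lemma monic_prod:
  fixes a :: "nat \<Rightarrow> complex"
  assumes "finite S"
  shows "degree (\<Prod>u\<in>S. [:a u, 1:]) = card S \<and> coeff (\<Prod>u\<in>S. [:a u, 1:]) (card S) = 1"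
  using assms
proof (induction S rule: finite_induct)
  case empty then show ?case by simp
next
  case (insert x S)
  let ?P = "\<Prod>u\<in>S. [:a u, 1:]"
  have nz: "?P \<noteq> 0" using insert by (metis coeff_0 zero_neq_one)
  have d: "degree ([:a x, 1:] * ?P) = Suc (card S)"
    using nz insert by (subst degree_mult_eq) auto
  have "coeff ([:a x, 1:] * ?P) (degree [:a x, 1:] + degree ?P) = 1"
    by (subst coeff_mult_degree_sum) (use insert in simp)
  then show ?case using insert d by simp
qed

definition pfgg :: "(nat \<Rightarrow> complex) \<Rightarrow> nat set \<Rightarrow> nat \<Rightarrow> complex" where
  "pfgg y J j = (\<Prod>u\<in>J-{j}. (y j + y u) / (y j - y u))"

lemma K_lemma:
  fixes y :: "nat \<Rightarrow> complex"
  assumes fin: "finite J" and inj: "inj_on y J"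
    and sums: "\<And>u v. u \<in> J \<Longrightarrow> v \<in> J \<Longrightarrow> u \<noteq> v \<Longrightarrow> y u + y v \<noteq> 0"
    and xs: "\<And>j. j \<in> J \<Longrightarrow> x + y j \<noteq> 0"
  shows "(\<Sum>j\<in>J. pfgg y J j * ((x - y j) / (x + y j))) + (1 - (\<Sum>j\<in>J. pfgg y J j))
         = (\<Prod>j\<in>J. (x - y j) / (x + y j))"
proof -
  define G where "G = (\<Sum>j\<in>J. pfgg y J j)"
  define p where "p = (\<Sum>j\<in>J. Polynomial.smult (pfgg y J j) ([:- y j, 1:] * (\<Prod>u\<in>J-{j}. [:y u, 1:])))
                      + Polynomial.smult (1 - G) (\<Prod>u\<in>J. [:y u, 1:])"
  define q where "q = (\<Prod>u\<in>J. [:- y u, 1:])"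
  have dq: "degree q = card J" and cq: "coeff q (card J) = 1"
    using monic_prod[OF fin, of "\<lambda>u. - y u"] by (auto simp: q_def)
  have dP: "degree (\<Prod>u\<in>J. [:y u, 1:]) = card J" and cP: "coeff (\<Prod>u\<in>J. [:y u, 1:]) (card J) = 1"
    using monic_prod[OF fin, of y] by auto
  have trm: "degree ([:- y j, 1:] * (\<Prod>u\<in>J-{j}. [:y u, 1:])) = card J \<and>
              coeff ([:- y j, 1:] * (\<Prod>u\<in>J-{j}. [:y u, 1:])) (card J) = 1" if j: "j \<in> J" for j
  proof -
    have m: "degree (\<Prod>u\<in>J-{j}. [:y u, 1:]) = card (J - {j}) \<and> coeff (\<Prod>u\<in>J-{j}. [:y u, 1:]) (card (J-{j})) = 1"
      using monic_prod[of "J-{j}" y] fin by auto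
    have nz: "(\<Prod>u\<in>J-{j}. [:y u, 1:]) \<noteq> 0" using m by (metis coeff_0 zero_neq_one)
    have cj: "card J = Suc (card (J - {j}))" using j fin
      by (metis card_Suc_Diff1)
    have d: "degree ([:- y j, 1:] * (\<Prod>u\<in>J-{j}. [:y u, 1:])) = card J"
      using nz m cj by (subst degree_mult_eq) auto
    have "coeff ([:- y j, 1:] * (\<Prod>u\<in>J-{j}. [:y u, 1:])) (degree [:- y j, 1:] + degree (\<Prod>u\<in>J-{j}. [:y u, 1:])) = 1"
      by (subst coeff_mult_degree_sum) (use m in simp)
    then show ?thesis using d m cj by simp
  qed
  have dp: "degree p \<le> card J"
    unfolding p_def
    apply (rule degree_add_le)
     apply (rule degree_sum_le[OF fin])
     apply (rule order.trans[OF degree_smult_le])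
    using trm apply simp
    using dP order.trans[OF degree_smult_le] by simp
  have cp: "coeff p (card J) = 1"
    unfolding p_def using trm cP by (simp add: coeff_sum G_def)
  have ev: "poly p (- y l) = poly q (- y l)" if l: "l \<in> J" for l
  proof -
    have z1: "poly (\<Prod>u\<in>J-{j}. [:y u, 1:]) (- y l) = 0" if "j \<in> J" "j \<noteq> l" for j
      using that l fin by (auto simp: poly_prod intro!: prod_zero bexI[of _ l])
    have z2: "poly (\<Prod>u\<in>J. [:y u, 1:]) (- y l) = 0"
      using l fin by (auto simp: poly_prod intro!: prod_zero bexI[of _ l])
    have "poly p (- y l) = (\<Sum>j\<in>J. pfgg y J j * ((- y l - y j) * poly (\<Prod>u\<in>J-{j}. [:y u, 1:]) (- y l)))"
      unfolding p_def using z2 by (simp add: poly_sum algebra_simps)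
    also have "\<dots> = pfgg y J l * ((- y l - y l) * poly (\<Prod>u\<in>J-{l}. [:y u, 1:]) (- y l))"
      using z1 l fin by (subst sum.remove[of _ l]) (auto intro!: sum.neutral)
    also have "\<dots> = (- 2 * y l) * (\<Prod>u\<in>J-{l}. ((y l + y u) / (y l - y u)) * (y u - y l))"
      by (simp add: pfgg_def poly_prod prod.distrib[symmetric])
    also have "\<dots> = (- 2 * y l) * (\<Prod>u\<in>J-{l}. - (y l + y u))"
    proof -
      have "((y l + y u) / (y l - y u)) * (y u - y l) = - (y l + y u)" if "u \<in> J-{l}" for u
      proof -
        have "y l \<noteq> y u" using inj l that by (auto dest: inj_onD)
        then have "y l - y u \<noteq> 0" by simp
        then show ?thesis by (simp add: field_simps)
      qed
      then have "(\<Prod>u\<in>J-{l}. ((y l + y u) / (y l - y u)) * (y u - y l)) = (\<Prod>u\<in>J-{l}. - (y l + y u))" by (rule prod.cong[OF refl])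
      then show ?thesis by simp
    qed
    also have "\<dots> = poly q (- y l)"
      unfolding q_def poly_prod using l fin
      by (subst prod.remove[of _ l]) (auto intro!: prod.cong simp: algebra_simps)
    finally show ?thesis .
  qed
  have "p = q"
  proof (rule poly_eqI_degree_lead_coeff[of p "card J" q "(\<lambda>u. - y u) ` J"])
    show "coeff p (card J) = coeff q (card J)" using cp cq by simp
    have "inj_on (\<lambda>u. - y u) J" using inj by (auto simp: inj_on_def)
    then show "card J \<le> card ((\<lambda>u. - y u) ` J)" by (simp add: card_image)
    show "degree p \<le> card J" by fact
    show "degree q \<le> card J" using dq by simp
    show "\<And>z. z \<in> (\<lambda>u. - y u) ` J \<Longrightarrow> poly p z = poly q z" using ev by auto
  qed
  then have eq: "poly p x = poly q x" by simp
  define H where "H = (\<Prod>u\<in>J. x + y u)"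
  have Hnz: "H \<noteq> 0" unfolding H_def using xs fin by auto
  have Hj: "H = (x + y j) * (\<Prod>u\<in>J-{j}. x + y u)" if "j \<in> J" for j
    unfolding H_def using that fin by (simp add: prod.remove)
  have "poly p x = (\<Sum>j\<in>J. pfgg y J j * ((x - y j) * (\<Prod>u\<in>J-{j}. x + y u))) + (1 - G) * H"
    unfolding p_def H_def by (simp add: poly_sum poly_prod algebra_simps)
  also have "\<dots> = H * ((\<Sum>j\<in>J. pfgg y J j * ((x - y j) / (x + y j))) + (1 - G))"
  proof -
    have "pfgg y J j * ((x - y j) * (\<Prod>u\<in>J-{j}. x + y u)) = H * (pfgg y J j * ((x - y j) / (x + y j)))"
      if "j \<in> J" for j using Hj[OF that] xs[OF that] by (simp add: field_simps)
    then show ?thesis by (simp add: sum_distrib_left algebra_simps cong: sum.cong)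
  qed
  finally have 1: "poly p x = H * ((\<Sum>j\<in>J. pfgg y J j * ((x - y j) / (x + y j))) + (1 - G))" .
  have 2: "poly q x = H * (\<Prod>j\<in>J. (x - y j) / (x + y j))"
    unfolding q_def H_def using xs by (simp add: poly_prod prod.distrib[symmetric] cong: prod.cong)
  show ?thesis using eq 1 2 Hnz unfolding G_def by simp
qed



lemma L_lemma:
  fixes y :: "nat \<Rightarrow> complex"
  assumes "finite J"
  shows "inj_on y J \<Longrightarrow> (\<forall>u\<in>J. \<forall>v\<in>J. u \<noteq> v \<longrightarrow> y u + y v \<noteq> 0) \<Longrightarrow>
         (\<Sum>j\<in>J. pfgg y J j) = (if odd (card J) then 1 else 0)"
  using assms
proof (induction J rule: finite_induct)
  case empty then show ?case by simp
next
  case (insert z J)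
  have injJ: "inj_on y J" using insert.prems by (auto simp: inj_on_def)
  have sJ: "\<forall>u\<in>J. \<forall>v\<in>J. u \<noteq> v \<longrightarrow> y u + y v \<noteq> 0" using insert.prems by auto
  have IH: "(\<Sum>j\<in>J. pfgg y J j) = (if odd (card J) then 1 else 0)" using insert.IH injJ sJ by blast
  define x where "x = - y z"
  have xs: "x + y j \<noteq> 0" if "j \<in> J" for j
  proof -
    have "y j \<noteq> y z" using insert.prems(1) insert.hyps that by (auto simp: inj_on_def)
    then show ?thesis unfolding x_def by (metis add.commute diff_eq_eq eq_neg_iff_add_eq_0 minus_diff_eq neg_equal_iff_equal)
  qed
  have K: "(\<Sum>j\<in>J. pfgg y J j * ((x - y j) / (x + y j))) + (1 - (\<Sum>j\<in>J. pfgg y J j))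
         = (\<Prod>j\<in>J. (x - y j) / (x + y j))"
    by (rule K_lemma[OF insert.hyps(1) injJ]) (use sJ xs in auto)
  have g1: "pfgg y (insert z J) j = pfgg y J j * (- ((x - y j) / (x + y j)))" if "j \<in> J" for j
  proof -
    have "insert z J - {j} = insert z (J - {j})" using that insert.hyps by auto
    then have "pfgg y (insert z J) j = (y j + y z) / (y j - y z) * pfgg y J j"
      unfolding pfgg_def using insert.hyps by simp
    also have "(y j + y z) / (y j - y z) = - ((x - y j) / (x + y j))"
    proof -
      have e: "x - y j = -(y j + y z)" "x + y j = y j - y z" by (simp_all add: x_def)
      show ?thesis unfolding e by (metis minus_divide_left minus_minus)
    qed
    finally show ?thesis by simp
  qed
  have g2: "pfgg y (insert z J) z = (\<Prod>j\<in>J. (x - y j) / (x + y j))"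
  proof -
    have "insert z J - {z} = J" using insert.hyps by auto
    then have "pfgg y (insert z J) z = (\<Prod>u\<in>J. (y z + y u) / (y z - y u))" unfolding pfgg_def by simp
    also have "\<dots> = (\<Prod>j\<in>J. (x - y j) / (x + y j))"
    proof (intro prod.cong refl)
      fix j assume "j \<in> J"
      have e: "x - y j = -(y z + y j)" "x + y j = -(y z - y j)" by (simp_all add: x_def)
      show "(y z + y j) / (y z - y j) = (x - y j) / (x + y j)" unfolding e by (rule minus_divide_divide[symmetric])
    qed
    finally show ?thesis .
  qed
  have "(\<Sum>j\<in>insert z J. pfgg y (insert z J) j) = pfgg y (insert z J) z + (\<Sum>j\<in>J. pfgg y (insert z J) j)"
    using insert.hyps by simp
  also have "\<dots> = (\<Prod>j\<in>J. (x - y j) / (x + y j)) - (\<Sum>j\<in>J. pfgg y J j * ((x - y j) / (x + y j)))"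
    using g1 g2 by (simp add: sum_negf)
  also have "\<dots> = 1 - (\<Sum>j\<in>J. pfgg y J j)" using K by (simp add: algebra_simps)
  finally show ?case using IH insert.hyps by simp
qed

definition pfeps :: "nat \<Rightarrow> nat \<Rightarrow> nat set \<Rightarrow> complex" where
  "pfeps a c I = (-1) ^ ((if c < a then 1 else 0) + card {z\<in>I-{a,c}. z<a} + card {z\<in>I-{a,c}. z<c})"

fun pfn :: "(nat \<Rightarrow> nat \<Rightarrow> complex) \<Rightarrow> nat \<Rightarrow> nat set \<Rightarrow> complex" where
  "pfn A 0 I = 1"
| "pfn A (Suc n) I = (\<Sum>j\<in>I-{Min I}. pfeps (Min I) j I * A (Min I) j * pfn A n (I - {Min I, j}))"

definition pfpp :: "(nat \<Rightarrow> nat \<Rightarrow> complex) \<Rightarrow> nat set \<Rightarrow> complex" where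
  "pfpp f I = (\<Prod>u\<in>I. \<Prod>v\<in>{v\<in>I. u<v}. f u v)"

lemma pfpp_insert:
  assumes "finite U" "w \<notin> U"
  shows "pfpp f (insert w U) = pfpp f U * (\<Prod>u\<in>{u\<in>U. u<w}. f u w) * (\<Prod>v\<in>{v\<in>U. w<v}. f w v)"
proof -
  have a: "{v\<in>insert w U. w<v} = {v\<in>U. w<v}" by auto
  have b: "(\<Prod>v\<in>{v\<in>insert w U. u<v}. f u v) = (\<Prod>v\<in>{v\<in>U. u<v}. f u v) * (if u < w then f u w else 1)"
    if "u \<in> U" for u
  proof (cases "u < w")
    case True
    then have "{v\<in>insert w U. u<v} = insert w {v\<in>U. u<v}" by auto
    then show ?thesis using True assms by simp
  next
    case False
    then have "{v\<in>insert w U. u<v} = {v\<in>U. u<v}" by auto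
    then show ?thesis using False by simp
  qed
  have c: "(\<Prod>u\<in>U. (if u < w then f u w else 1)) = (\<Prod>u\<in>{u\<in>U. u<w}. f u w)"
    using assms(1) by (simp add: prod.inter_filter)
  have "pfpp f (insert w U) = (\<Prod>v\<in>{v\<in>U. w<v}. f w v) * (\<Prod>u\<in>U. \<Prod>v\<in>{v\<in>insert w U. u<v}. f u v)"
    unfolding pfpp_def using assms a by simp
  also have "(\<Prod>u\<in>U. \<Prod>v\<in>{v\<in>insert w U. u<v}. f u v) = pfpp f U * (\<Prod>u\<in>{u\<in>U. u<w}. f u w)"
    unfolding pfpp_def using b c by (simp add: prod.distrib cong: prod.cong)
  finally show ?thesis by (simp add: algebra_simps)
qed



lemma prod_uminus_gen:
  fixes a :: "nat \<Rightarrow> complex"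
  shows "(\<Prod>u\<in>S. - a u) = (-1) ^ card S * (\<Prod>u\<in>S. a u)"
  by (induction S rule: infinite_finite_induct) auto

lemma pfeps_min:
  assumes "finite I" "j \<in> I" "j \<noteq> Min I"
  shows "pfeps (Min I) j I = (-1) ^ card {z\<in>I-{Min I}. z<j}"
proof -
  have m: "Min I \<le> u" if "u \<in> I" for u using assms that by simp
  have mj: "Min I < j" using m[OF assms(2)] assms(3) by simp
  have e1: "{z\<in>I-{Min I,j}. z<Min I} = {}" using m by force
  have e2: "{z\<in>I-{Min I,j}. z<j} = {z\<in>I-{Min I}. z<j}" by auto
  show ?thesis unfolding pfeps_def e1 e2 using mj by simp
qed

lemma schur:
  fixes q x :: "nat \<Rightarrow> complex"
  assumes "finite I" "card I = 2*n" "inj_on q I" "\<forall>u\<in>I. \<forall>v\<in>I. u \<noteq> v \<longrightarrow> q u + q v \<noteq> 0"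
  shows "pfn (\<lambda>u v. x u * x v * ((q u - q v)/(q u + q v))) n I
         = (\<Prod>u\<in>I. x u) * pfpp (\<lambda>u v. (q u - q v)/(q u + q v)) I"
  using assms
proof (induction n arbitrary: I)
  case 0
  then have "I = {}" by simp
  then show ?case by (simp add: pfpp_def)
next
  case (Suc n)
  define f where "f = (\<lambda>u v. (q u - q v)/(q u + q v))"
  define D where "D = (\<lambda>u v. x u * x v * f u v)"
  define i where "i = Min I"
  define J where "J = I - {i}"
  have Ine: "I \<noteq> {}" using Suc.prems by auto
  have iI: "i \<in> I" unfolding i_def using Suc.prems Ine by simp
  have imin: "i \<le> u" if "u \<in> I" for u unfolding i_def using Suc.prems that by simp
  have IJ: "I = insert i J" "i \<notin> J" unfolding J_def using iI by auto
  have finJ: "finite J" unfolding J_def using Suc.prems by simp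
  have cardJ: "card J = Suc (2*n)" unfolding J_def using Suc.prems iI by (simp add: card_Diff_singleton)
  have qne: "q u \<noteq> q v" if "u \<in> I" "v \<in> I" "u \<noteq> v" for u v
    using Suc.prems(3) that by (auto dest: inj_onD)
  have fnz: "f u v \<noteq> 0" if "u \<in> I" "v \<in> I" "u \<noteq> v" for u v
  proof -
    have "q u + q v \<noteq> 0" using Suc.prems(4) that by blast
    moreover have "q u - q v \<noteq> 0" using qne[OF that] by simp
    ultimately show ?thesis unfolding f_def by simp
  qed
  have fskew: "f u v = - f v u" for u v
  proof -
    have e: "q u - q v = -(q v - q u)" "q u + q v = q v + q u" by simp_all
    show ?thesis unfolding f_def e by (simp only: minus_divide_left)
  qed
  have injJ: "inj_on q J" by (rule inj_on_subset[OF Suc.prems(3)]) (auto simp: J_def)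
  have sumsJ: "\<And>u v. u \<in> J \<Longrightarrow> v \<in> J \<Longrightarrow> u \<noteq> v \<Longrightarrow> q u + q v \<noteq> 0"
    using Suc.prems(4) unfolding J_def by blast
  have L0: "(\<Sum>j\<in>J. pfgg q J j) = (if odd (card J) then 1 else 0)"
    by (rule L_lemma[OF finJ injJ]) (use sumsJ in blast)
  have L: "(\<Sum>j\<in>J. pfgg q J j) = 1" using L0 cardJ by simp
  have xsJ: "q i + q j \<noteq> 0" if "j \<in> J" for j
  proof -
    have "j \<in> I" "i \<noteq> j" using that unfolding J_def by auto
    then show ?thesis using Suc.prems(4) iI by simp
  qed
  have K: "(\<Sum>j\<in>J. pfgg q J j * ((q i - q j) / (q i + q j))) + (1 - (\<Sum>j\<in>J. pfgg q J j))
         = (\<Prod>j\<in>J. (q i - q j) / (q i + q j))"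
    by (rule K_lemma[OF finJ injJ sumsJ xsJ])
  have KL: "(\<Sum>j\<in>J. pfgg q J j * f i j) = (\<Prod>j\<in>J. f i j)"
    using K unfolding L f_def by simp
  have ppI: "pfpp f I = pfpp f J * (\<Prod>v\<in>J. f i v)"
  proof -
    have lo: "{u\<in>J. u<i} = {}"
    proof -
      have "\<not> u < i" if "u \<in> J" for u using imin[of u] that unfolding J_def by simp
      then show ?thesis by blast
    qed
    have hi: "{v\<in>J. i<v} = J"
    proof -
      have "i < v" if "v \<in> J" for v using imin[of v] that unfolding J_def by auto
      then show ?thesis by blast
    qed
    show ?thesis unfolding IJ(1) pfpp_insert[OF finJ IJ(2)] lo hi by simp
  qed
  have step: "pfeps i j I * D i j * pfn D n (I - {i, j}) = (\<Prod>u\<in>I. x u) * pfpp f J * (pfgg q J j * f i j)"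
    if jJ: "j \<in> J" for j
  proof -
    define c where "c = card {z\<in>J. z<j}"
    define R where "R = (\<Prod>u\<in>J-{j}. f j u)"
    have jI: "j \<in> I" and ji: "j \<noteq> i" using jJ unfolding J_def by auto
    have e: "pfeps i j I = (-1) ^ c"
      unfolding c_def J_def i_def using pfeps_min[OF Suc.prems(1) jI] ji i_def by simp
    have IJj: "I - {i, j} = J - {j}" unfolding J_def by auto
    have IH: "pfn D n (J - {j}) = (\<Prod>u\<in>J-{j}. x u) * pfpp f (J - {j})"
    proof -
      have "card (J - {j}) = 2 * n" using cardJ jJ finJ by (simp add: card_Diff_singleton)
      moreover have "inj_on q (J - {j})" using injJ by (auto simp: inj_on_def)
      moreover have "\<forall>u\<in>J-{j}. \<forall>v\<in>J-{j}. u \<noteq> v \<longrightarrow> q u + q v \<noteq> 0" using sumsJ by auto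
      ultimately show ?thesis using Suc.IH[of "J - {j}"] finJ unfolding D_def f_def by simp
    qed
    have eqA: "pfpp f J = pfpp f (J - {j}) * (-1) ^ c * R"
    proof -
      define Lo where "Lo = {u\<in>J-{j}. u<j}"
      define Hi where "Hi = {v\<in>J-{j}. j<v}"
      have "J = insert j (J - {j})" using jJ by auto
      then have "pfpp f J = pfpp f (J - {j}) * (\<Prod>u\<in>Lo. f u j) * (\<Prod>v\<in>Hi. f j v)"
        unfolding Lo_def Hi_def using pfpp_insert[of "J - {j}" j f] finJ by simp
      also have "(\<Prod>u\<in>Lo. f u j) = (-1) ^ c * (\<Prod>u\<in>Lo. f j u)"
      proof -
        have "(\<Prod>u\<in>Lo. f u j) = (\<Prod>u\<in>Lo. - f j u)" by (rule prod.cong[OF refl], rule fskew)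
        also have "\<dots> = (-1) ^ card Lo * (\<Prod>u\<in>Lo. f j u)" by (rule prod_uminus_gen)
        also have "card Lo = c" unfolding c_def Lo_def by (intro arg_cong[where f=card]) auto
        finally show ?thesis .
      qed
      also have "(\<Prod>u\<in>Lo. f j u) * (\<Prod>v\<in>Hi. f j v) = R"
      proof -
        have sp: "J - {j} = Lo \<union> Hi" unfolding Lo_def Hi_def by auto
        have "R = (\<Prod>u\<in>Lo \<union> Hi. f j u)" unfolding R_def sp ..
        also have "\<dots> = (\<Prod>u\<in>Lo. f j u) * (\<Prod>v\<in>Hi. f j v)"
          by (rule prod.union_disjoint) (use finJ in \<open>auto simp: Lo_def Hi_def\<close>)
        finally show ?thesis by simp
      qed
      ultimately show ?thesis by (simp add: algebra_simps)
    qed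
    have Rnz: "R \<noteq> 0"
    proof -
      have "f j u \<noteq> 0" if "u \<in> J - {j}" for u using fnz[of j u] jI that unfolding J_def by simp
      then show ?thesis unfolding R_def using finJ by simp
    qed
    have ggR: "pfgg q J j * R = 1"
    proof -
      have "pfgg q J j = (\<Prod>u\<in>J-{j}. inverse (f j u))"
        unfolding pfgg_def f_def by (simp add: inverse_divide)
      also have "\<dots> = inverse R" unfolding R_def using prod_inversef[of "f j" "J - {j}"] by (simp add: comp_def)
      finally show ?thesis using Rnz by simp
    qed
    have X: "(\<Prod>u\<in>I. x u) = x i * (x j * (\<Prod>u\<in>J-{j}. x u))"
      using IJ finJ jJ by (simp add: prod.remove)
    have "pfeps i j I * D i j * pfn D n (I - {i, j})
          = (-1) ^ c * (x i * x j * f i j) * ((\<Prod>u\<in>J-{j}. x u) * pfpp f (J - {j}))"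
      by (simp only: e IJj IH) (simp add: D_def)
    also have "\<dots> = x i * (x j * (\<Prod>u\<in>J-{j}. x u)) * (pfpp f (J - {j}) * (-1) ^ c * (R * pfgg q J j)) * f i j"
      using ggR by (simp add: algebra_simps)
    also have "\<dots> = (\<Prod>u\<in>I. x u) * pfpp f J * (pfgg q J j * f i j)"
      unfolding X eqA by (simp add: algebra_simps)
    finally show ?thesis .
  qed
  have "pfn D (Suc n) I = (\<Sum>j\<in>J. pfeps i j I * D i j * pfn D n (I - {i, j}))"
    unfolding J_def i_def by simp
  also have "\<dots> = (\<Sum>j\<in>J. (\<Prod>u\<in>I. x u) * pfpp f J * (pfgg q J j * f i j))"
    using step by (rule sum.cong[OF refl])
  also have "\<dots> = (\<Prod>u\<in>I. x u) * pfpp f J * (\<Prod>j\<in>J. f i j)"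
    using KL by (simp add: sum_distrib_left[symmetric])
  also have "\<dots> = (\<Prod>u\<in>I. x u) * pfpp f I" using ppI by simp
  finally show ?case unfolding D_def f_def .
qed



definition pfblk :: "nat \<Rightarrow> nat set" where "pfblk k = {2*k - 1, 2*k}"
definition pfPI :: "nat set \<Rightarrow> nat set" where "pfPI I = {k. 1 \<le> k \<and> pfblk k \<subseteq> I}"
definition pfBm :: "nat \<Rightarrow> nat \<Rightarrow> complex" where "pfBm u v = (if odd u \<and> v = u + 1 then 1 else 0)"

lemma pfblk_mem: "u \<in> pfblk k \<longleftrightarrow> u = 2*k - 1 \<or> u = 2*k" by (auto simp: pfblk_def)

lemma pfblk_disj: "1 \<le> k \<Longrightarrow> 1 \<le> k' \<Longrightarrow> k \<noteq> k' \<Longrightarrow> pfblk k \<inter> pfblk k' = {}"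
  by (auto simp: pfblk_def)

lemma card_blk: "1 \<le> k \<Longrightarrow> card (pfblk k) = 2" by (auto simp: pfblk_def)

lemma finite_PI: "finite I \<Longrightarrow> finite (pfPI I)"
proof -
  assume f: "finite I"
  have "pfPI I \<subseteq> {0..Max I}"
  proof
    fix k assume "k \<in> pfPI I"
    then have "2*k \<in> I" by (auto simp: pfPI_def pfblk_def)
    then have "2*k \<le> Max I" using f by simp
    then show "k \<in> {0..Max I}" by simp
  qed
  then show ?thesis by (rule finite_subset) simp
qed

lemma card_UN_blk:
  assumes "finite S" "S \<subseteq> {k. 1 \<le> k}"
  shows "card (\<Union>(pfblk ` S)) = 2 * card S"
proof -
  have "card (\<Union>(pfblk ` S)) = (\<Sum>k\<in>S. card (pfblk k))"
    by (rule card_UN_disjoint) (use assms pfblk_disj in \<open>auto simp: pfblk_def\<close>)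
  also have "\<dots> = (\<Sum>k\<in>S. 2)" using assms card_blk by (intro sum.cong) auto
  finally show ?thesis by simp
qed

lemma even_card_blk_below:
  assumes "finite S" "S \<subseteq> {k. 1 \<le> k}" "j \<notin> \<Union>(pfblk ` S)"
  shows "even (card {z \<in> \<Union>(pfblk ` S). z < j})"
  using assms
proof (induction S rule: finite_induct)
  case empty then show ?case by simp
next
  case (insert k S)
  have k1: "1 \<le> k" using insert.prems by auto
  have IH: "even (card {z \<in> \<Union>(pfblk ` S). z < j})" using insert by auto
  have jk: "j \<noteq> 2*k - 1" "j \<noteq> 2*k" using insert.prems by (auto simp: pfblk_def)
  have d: "pfblk k \<inter> \<Union>(pfblk ` S) = {}" using pfblk_disj insert k1 by auto
  have split: "{z \<in> \<Union>(pfblk ` insert k S). z < j} = {z \<in> pfblk k. z < j} \<union> {z \<in> \<Union>(pfblk ` S). z < j}" by auto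
  have fin: "finite (\<Union>(pfblk ` S))" using insert.hyps by (simp add: pfblk_def)
  have "card {z \<in> \<Union>(pfblk ` insert k S). z < j} = card {z \<in> pfblk k. z < j} + card {z \<in> \<Union>(pfblk ` S). z < j}"
    unfolding split by (rule card_Un_disjoint) (use d fin in \<open>auto simp: pfblk_def\<close>)
  moreover have "even (card {z \<in> pfblk k. z < j})"
  proof (cases "2*k < j")
    case True
    then have "{z \<in> pfblk k. z < j} = pfblk k" by (auto simp: pfblk_def)
    then show ?thesis using card_blk[OF k1] by simp
  next
    case False
    then have "{z \<in> pfblk k. z < j} = {}" using jk k1 by (auto simp: pfblk_def)
    then show ?thesis by (metis card.empty even_zero)
  qed
  ultimately show ?case using IH by simp
qed

lemma pfeps_remove:
  assumes "finite I" "U \<subseteq> I - {a, c}" "even (card {z\<in>U. z<a})" "even (card {z\<in>U. z<c})"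
  shows "pfeps a c (I - U) = pfeps a c I"
proof -
  have cnt: "card {z\<in>I-{a,c}. z<t} = card {z\<in>(I-U)-{a,c}. z<t} + card {z\<in>U. z<t}" for t
  proof -
    have e: "{z\<in>I-{a,c}. z<t} = {z\<in>(I-U)-{a,c}. z<t} \<union> {z\<in>U. z<t}" using assms(2) by auto
    have fU: "finite U" using assms(1,2) finite_subset by blast
    show ?thesis unfolding e by (rule card_Un_disjoint) (use assms(1) fU in auto)
  qed
  have p: "(-1::complex) ^ (m + e) = (-1) ^ m" if "even e" for m e
    using that by (simp add: power_add)
  show ?thesis unfolding pfeps_def cnt
    using p[OF assms(3)] p[OF assms(4)]
    by (simp add: algebra_simps power_add)
qed



lemma pf_sum:
  fixes A :: "nat \<Rightarrow> nat \<Rightarrow> complex"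
  assumes "finite I" "card I = 2*n"
  shows "pfn (\<lambda>u v. A u v + pfBm u v) n I = (\<Sum>S\<in>Pow (pfPI I). pfn A (n - card S) (I - \<Union>(pfblk ` S)))"
  using assms
proof (induction n arbitrary: I)
  case 0
  then have I: "I = {}" by simp
  have "pfPI {} = {}" by (auto simp: pfPI_def pfblk_def)
  then show ?case using I by simp
next
  case (Suc n)
  define AB where "AB = (\<lambda>u v. A u v + pfBm u v)"
  define i where "i = Min I"
  define P where "P = pfPI (I - {i})"
  define UU where "UU = (\<lambda>S. \<Union>(pfblk ` S))"
  have finI: "finite I" using Suc.prems by simp
  have Ine: "I \<noteq> {}" using Suc.prems by auto
  have iI: "i \<in> I" unfolding i_def using finI Ine by simp
  have imin: "i \<le> u" if "u \<in> I" for u unfolding i_def using finI that by simp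
  have IH: "pfn AB n (I - {i,j}) = (\<Sum>S\<in>Pow (pfPI (I-{i,j})). pfn A (n - card S) (I - {i,j} - UU S))"
    if "j \<in> I - {i}" for j
  proof -
    have "card (I - {i,j}) = card I - card {i,j}" using that iI finI by (intro card_Diff_subset) auto
    also have "card {i,j} = 2" using that by simp
    finally have "card (I - {i,j}) = 2 * n" using Suc.prems by simp
    then show ?thesis using Suc.IH[of "I - {i,j}"] finI unfolding AB_def UU_def by simp
  qed
  have finP: "finite P" unfolding P_def using finI by (simp add: finite_PI)
  define G where "G = (\<lambda>S j. pfeps i j I * A i j * pfn A (n - card S) (I - {i,j} - UU S))"
  have each: "pfn A (Suc n - card S) (I - UU S) = (\<Sum>j\<in>I-{i}-UU S. G S j)" if S: "S \<in> Pow P" for S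
  proof -
    have SP: "S \<subseteq> P" using S by simp
    have finS: "finite S" using SP finP finite_subset by blast
    have S1: "S \<subseteq> {k. 1 \<le> k}" using SP unfolding P_def pfPI_def by auto
    have Usub: "UU S \<subseteq> I - {i}" using SP unfolding P_def pfPI_def UU_def by auto
    have cU: "card (UU S) = 2 * card S" unfolding UU_def by (rule card_UN_blk[OF finS S1])
    have cIU: "card (I - UU S) = 2 * Suc n - 2 * card S"
      using Usub finI cU Suc.prems by (subst card_Diff_subset) (auto intro: finite_subset)
    have iIU: "i \<in> I - UU S" using iI Usub by auto
    then have "card (I - UU S) > 0" using finI by (auto simp: card_gt_0_iff)
    then have le: "card S \<le> n" using cIU by simp
    then have sn: "Suc n - card S = Suc (n - card S)" by simp
    have mn: "Min (I - UU S) = i"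
      by (rule Min_eqI) (use finI iIU imin in auto)
    have "pfn A (Suc n - card S) (I - UU S)
          = (\<Sum>j\<in>(I - UU S)-{i}. pfeps i j (I - UU S) * A i j * pfn A (n - card S) ((I - UU S) - {i, j}))"
      unfolding sn by (simp add: mn)
    also have "\<dots> = (\<Sum>j\<in>I-{i}-UU S. G S j)"
    proof (rule sum.cong)
      show "I - UU S - {i} = I - {i} - UU S" by auto
    next
      fix j assume j: "j \<in> I - {i} - UU S"
      have "pfeps i j (I - UU S) = pfeps i j I"
      proof (rule pfeps_remove[OF finI])
        show "UU S \<subseteq> I - {i, j}" using Usub j by auto
        have "{z \<in> UU S. z < i} = {}" using Usub imin by force
        then show "even (card {z \<in> UU S. z < i})" by (metis card.empty even_zero)
        show "even (card {z \<in> UU S. z < j})"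
          unfolding UU_def by (rule even_card_blk_below[OF finS S1]) (use j UU_def in simp)
      qed
      moreover have "I - UU S - {i, j} = I - {i,j} - UU S" by auto
      ultimately show "pfeps i j (I - UU S) * A i j * pfn A (n - card S) (I - UU S - {i, j}) = G S j"
        unfolding G_def by simp
    qed
    finally show ?thesis .
  qed
  have Common: "(\<Sum>S\<in>Pow P. pfn A (Suc n - card S) (I - UU S))
                = (\<Sum>j\<in>I-{i}. pfeps i j I * A i j * pfn AB n (I-{i,j}))"
  proof -
    have "(\<Sum>S\<in>Pow P. pfn A (Suc n - card S) (I - UU S)) = (\<Sum>S\<in>Pow P. \<Sum>j\<in>I-{i}-UU S. G S j)"
      using each by (rule sum.cong[OF refl])
    also have "\<dots> = (\<Sum>S\<in>Pow P. \<Sum>j\<in>I-{i}. if j \<notin> UU S then G S j else 0)"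
    proof (rule sum.cong[OF refl])
      fix S
      have e: "I - {i} - UU S = {j \<in> I-{i}. j \<notin> UU S}" by auto
      show "(\<Sum>j\<in>I-{i}-UU S. G S j) = (\<Sum>j\<in>I-{i}. if j \<notin> UU S then G S j else 0)"
        unfolding e by (rule sum.inter_filter) (use finI in simp)
    qed
    also have "\<dots> = (\<Sum>j\<in>I-{i}. \<Sum>S\<in>Pow P. if j \<notin> UU S then G S j else 0)"
      by (rule sum.swap)
    also have "\<dots> = (\<Sum>j\<in>I-{i}. \<Sum>S\<in>Pow (pfPI (I-{i,j})). G S j)"
    proof (rule sum.cong[OF refl])
      fix j assume j: "j \<in> I - {i}"
      have e: "{S \<in> Pow P. j \<notin> UU S} = Pow (pfPI (I-{i,j}))"
        unfolding P_def pfPI_def UU_def by auto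
      show "(\<Sum>S\<in>Pow P. if j \<notin> UU S then G S j else 0) = (\<Sum>S\<in>Pow (pfPI (I-{i,j})). G S j)"
        unfolding e[symmetric] by (rule sum.inter_filter[symmetric]) (use finP in simp)
    qed
    also have "\<dots> = (\<Sum>j\<in>I-{i}. pfeps i j I * A i j * pfn AB n (I-{i,j}))"
    proof (rule sum.cong[OF refl])
      fix j assume j: "j \<in> I - {i}"
      show "(\<Sum>S\<in>Pow (pfPI (I-{i,j})). G S j) = pfeps i j I * A i j * pfn AB n (I-{i,j})"
        unfolding IH[OF j] G_def by (simp add: sum_distrib_left)
    qed
    finally show ?thesis .
  qed
  define C where "C = (odd i \<and> i + 1 \<in> I)"
  have PB: "(\<Sum>j\<in>I-{i}. pfeps i j I * pfBm i j * pfn AB n (I-{i,j})) = (if C then pfn AB n (I - {i, i+1}) else 0)"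
  proof (cases C)
    case True
    have j1: "i + 1 \<in> I - {i}" using True unfolding C_def by simp
    have e1: "pfeps i (i+1) I = 1"
    proof -
      have "pfeps i (i+1) I = (-1) ^ card {z\<in>I-{i}. z<i+1}"
        unfolding i_def using pfeps_min[OF finI] j1 i_def by simp
      also have "{z\<in>I-{i}. z<i+1} = {}" using imin by force
      finally show ?thesis by simp
    qed
    have "(\<Sum>j\<in>I-{i}. pfeps i j I * pfBm i j * pfn AB n (I-{i,j}))
          = pfeps i (i+1) I * pfBm i (i+1) * pfn AB n (I-{i,i+1}) + (\<Sum>j\<in>I-{i}-{i+1}. pfeps i j I * pfBm i j * pfn AB n (I-{i,j}))"
      using j1 finI by (subst sum.remove[of _ "i+1"]) auto
    also have "(\<Sum>j\<in>I-{i}-{i+1}. pfeps i j I * pfBm i j * pfn AB n (I-{i,j})) = 0"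
      by (rule sum.neutral) (auto simp: pfBm_def)
    finally show ?thesis using True e1 unfolding C_def by (simp add: pfBm_def)
  next
    case False
    have "(\<Sum>j\<in>I-{i}. pfeps i j I * pfBm i j * pfn AB n (I-{i,j})) = 0"
      by (rule sum.neutral) (use False in \<open>auto simp: pfBm_def C_def\<close>)
    then show ?thesis using False by simp
  qed
  have L1: "pfn AB (Suc n) I = (\<Sum>j\<in>I-{i}. pfeps i j I * A i j * pfn AB n (I-{i,j}))
                  + (\<Sum>j\<in>I-{i}. pfeps i j I * pfBm i j * pfn AB n (I-{i,j}))"
  proof -
    have "pfn AB (Suc n) I = (\<Sum>j\<in>I-{i}. pfeps i j I * AB i j * pfn AB n (I-{i,j}))"
      unfolding i_def by simp
    also have "\<dots> = (\<Sum>j\<in>I-{i}. pfeps i j I * A i j * pfn AB n (I-{i,j}) + pfeps i j I * pfBm i j * pfn AB n (I-{i,j}))"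
      by (rule sum.cong[OF refl]) (simp add: AB_def algebra_simps)
    finally show ?thesis by (simp add: sum.distrib)
  qed
  have RHS: "(\<Sum>S\<in>Pow (pfPI I). pfn A (Suc n - card S) (I - UU S))
             = (\<Sum>S\<in>Pow P. pfn A (Suc n - card S) (I - UU S)) + (if C then pfn AB n (I - {i, i+1}) else 0)"
  proof (cases C)
    case True
    define k0 where "k0 = (i + 1) div 2"
    have oi: "odd i" and i1: "i + 1 \<in> I" using True unfolding C_def by auto
    have k0b: "2 * k0 = i + 1" "2 * k0 - 1 = i" using oi unfolding k0_def by presburger+
    have k01: "1 \<le> k0" using k0b by simp
    have bk0: "pfblk k0 = {i, i+1}" unfolding pfblk_def using k0b by auto
    have PIeq: "pfPI I = insert k0 P"
    proof
      show "pfPI I \<subseteq> insert k0 P"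
      proof
        fix k assume k: "k \<in> pfPI I"
        show "k \<in> insert k0 P"
        proof (cases "i \<in> pfblk k")
          case True
          then have "i = 2*k - 1 \<or> i = 2*k" by (simp add: pfblk_mem)
          then have "k = k0" using oi k0b by presburger
          then show ?thesis by simp
        next
          case False
          then show ?thesis using k unfolding P_def pfPI_def by auto
        qed
      qed
      show "insert k0 P \<subseteq> pfPI I" using bk0 k01 iI i1 unfolding P_def pfPI_def by auto
    qed
    have k0P: "k0 \<notin> P" using bk0 unfolding P_def pfPI_def by auto
    have PIeq2: "pfPI (I - {i, i+1}) = P"
    proof
      show "pfPI (I - {i, i+1}) \<subseteq> P" unfolding P_def pfPI_def by auto
      show "P \<subseteq> pfPI (I - {i, i+1})"
      proof
        fix k assume k: "k \<in> P"
        then have k1: "1 \<le> k" and bs: "pfblk k \<subseteq> I - {i}" unfolding P_def pfPI_def by auto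
        have "i + 1 \<notin> pfblk k"
        proof
          assume "i + 1 \<in> pfblk k"
          then have "i + 1 = 2*k - 1 \<or> i + 1 = 2*k" by (simp add: pfblk_mem)
          then have "k = k0" using oi k0b k1 by presburger
          then show False using bs bk0 by auto
        qed
        then show "k \<in> pfPI (I - {i, i+1})" using k1 bs unfolding pfPI_def by auto
      qed
    qed
    define F where "F = (\<lambda>S. pfn A (Suc n - card S) (I - UU S))"
    have "(\<Sum>S\<in>Pow (pfPI I). F S) = (\<Sum>S\<in>Pow P. F S) + (\<Sum>S\<in>insert k0 ` Pow P. F S)"
      unfolding PIeq Pow_insert
      by (rule sum.union_disjoint) (use finP k0P in auto)
    also have "(\<Sum>S\<in>insert k0 ` Pow P. F S) = (\<Sum>S\<in>Pow P. F (insert k0 S))"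
    proof (rule sum.reindex[unfolded comp_def])
      show "inj_on (insert k0) (Pow P)"
      proof (rule inj_onI)
        fix x y assume "x \<in> Pow P" "y \<in> Pow P" "insert k0 x = insert k0 y"
        then show "x = y" using k0P by (metis PowD insert_ident subsetD)
      qed
    qed
    also have "(\<Sum>S\<in>Pow P. F (insert k0 S)) = pfn AB n (I - {i, i+1})"
    proof -
      have "pfn AB n (I - {i, i+1}) = (\<Sum>S\<in>Pow P. pfn A (n - card S) (I - {i,i+1} - UU S))"
        using IH[of "i+1"] i1 PIeq2 by simp
      also have "\<dots> = (\<Sum>S\<in>Pow P. F (insert k0 S))"
      proof (rule sum.cong[OF refl])
        fix S assume "S \<in> Pow P"
        then have SP: "S \<subseteq> P" by simp
        then have finS: "finite S" using finP finite_subset by blast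
        have k0S: "k0 \<notin> S" using SP k0P by auto
        have "card (insert k0 S) = Suc (card S)" using finS k0S by (rule card_insert_disjoint)
        moreover have uu: "UU (insert k0 S) = {i, i+1} \<union> UU S" unfolding UU_def using bk0 by simp
        moreover have "I - {i,i+1} - UU S = I - UU (insert k0 S)" using uu by auto
        ultimately show "pfn A (n - card S) (I - {i,i+1} - UU S) = F (insert k0 S)"
          unfolding F_def by simp
      qed
      finally show ?thesis by simp
    qed
    finally show ?thesis using True unfolding F_def by simp
  next
    case False
    have "pfPI I = P"
    proof
      show "P \<subseteq> pfPI I" unfolding P_def pfPI_def by auto
      show "pfPI I \<subseteq> P"
      proof
        fix k assume k: "k \<in> pfPI I"
        then have k1: "1 \<le> k" and bs: "pfblk k \<subseteq> I" unfolding pfPI_def by auto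
        have "i \<notin> pfblk k"
        proof
          assume ib: "i \<in> pfblk k"
          then have "i = 2*k - 1 \<or> i = 2*k" by (simp add: pfblk_mem)
          then show False
          proof
            assume h: "i = 2*k - 1"
            then have "odd i" using k1 by presburger
            moreover have "i + 1 \<in> I" using bs h k1 unfolding pfblk_def by auto
            ultimately show False using False unfolding C_def by simp
          next
            assume h: "i = 2*k"
            then have "2*k - 1 \<in> I" using bs unfolding pfblk_def by auto
            then have "i \<le> 2*k - 1" using imin by simp
            then show False using h k1 by simp
          qed
        qed
        then show "k \<in> P" using k1 bs unfolding P_def pfPI_def by auto
      qed
    qed
    then show ?thesis using False by simp
  qed
  have U: "(\<Sum>S\<in>Pow (pfPI I). pfn A (Suc n - card S) (I - \<Union>(pfblk ` S)))
        = (\<Sum>S\<in>Pow (pfPI I). pfn A (Suc n - card S) (I - UU S))" unfolding UU_def ..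
  show ?case
    unfolding AB_def[symmetric] U RHS L1 PB Common by simp
qed



lemma cnt_ins: "finite S \<Longrightarrow> w \<notin> S \<Longrightarrow>
   card {z\<in>insert w S. z<t} = card {z\<in>S. z<t} + (if w < t then 1 else 0)"
proof -
  assume f: "finite S" and w: "w \<notin> S"
  show ?thesis
  proof (cases "w < t")
    case True
    then have "{z\<in>insert w S. z<t} = insert w {z\<in>S. z<t}" by auto
    then show ?thesis using f w True by simp
  next
    case False
    then have "{z\<in>insert w S. z<t} = {z\<in>S. z<t}" by auto
    then show ?thesis using False by simp
  qed
qed

lemma minus_one_pow_parity:
  "even (m + n) \<Longrightarrow> (-1::complex) ^ m = (-1) ^ n"
  by (metis (no_types, lifting) even_add minus_one_power_iff)

lemma pfeps_swap:
  assumes "a \<noteq> c"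
  shows "pfeps c a I = - pfeps a c I"
proof -
  have "I - {c, a} = I - {a, c}" by auto
  then show ?thesis unfolding pfeps_def using assms
    by (cases "a < c") (auto simp: algebra_simps)
qed

lemma pfeps_four:
  assumes fin: "finite I" and mem: "i \<in> I" "a \<in> I" "b \<in> I" "d \<in> I"
    and dist: "i \<noteq> a" "i \<noteq> b" "i \<noteq> d" "a \<noteq> b" "a \<noteq> d" "b \<noteq> d"
  shows "pfeps i b I * pfeps a d (I - {i, b}) = pfeps a d I * pfeps i b (I - {a, d})"
proof -
  define R where "R = I - {i, a, b, d}"
  define K where "K = (\<lambda>t. card {z\<in>R. z<t})"
  define ind where "ind = (\<lambda>x y::nat. if x < y then 1 else (0::nat))"
  have finR: "finite R" unfolding R_def using fin by simp
  have c2: "card {z\<in>insert p (insert r R). z<t} = K t + ind p t + ind r t"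
    if "p \<notin> R" "r \<notin> R" "p \<noteq> r" for p r t
  proof -
    have "card {z\<in>insert p (insert r R). z<t} = card {z\<in>insert r R. z<t} + (if p < t then 1 else 0)"
      by (rule cnt_ins) (use finR that in auto)
    also have "card {z\<in>insert r R. z<t} = card {z\<in>R. z<t} + (if r < t then 1 else 0)"
      by (rule cnt_ins) (use finR that in auto)
    finally show ?thesis unfolding K_def ind_def by simp
  qed
  have nR: "i \<notin> R" "a \<notin> R" "b \<notin> R" "d \<notin> R" unfolding R_def by auto
  have s1: "I - {i, b} - {a, d} = R" "I - {a, d} - {i, b} = R" unfolding R_def by auto
  have s2: "I - {i, b} = insert a (insert d R)" "I - {a, d} = insert i (insert b R)"
    unfolding R_def using mem dist by auto
  have e1: "pfeps i b I = (-1) ^ (ind b i + (K i + ind a i + ind d i) + (K b + ind a b + ind d b))"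
    unfolding pfeps_def s2(1) using c2[of a d] nR dist by (simp add: ind_def)
  have e2: "pfeps a d (I - {i, b}) = (-1) ^ (ind d a + K a + K d)"
    unfolding pfeps_def s1 K_def ind_def by simp
  have e3: "pfeps a d I = (-1) ^ (ind d a + (K a + ind i a + ind b a) + (K d + ind i d + ind b d))"
    unfolding pfeps_def s2(2) using c2[of i b] nR dist by (simp add: ind_def)
  have e4: "pfeps i b (I - {a, d}) = (-1) ^ (ind b i + K i + K b)"
    unfolding pfeps_def s1 K_def ind_def by simp
  have ev: "even ((ind b i + (K i + ind a i + ind d i) + (K b + ind a b + ind d b)) + (ind d a + K a + K d)
            + ((ind d a + (K a + ind i a + ind b a) + (K d + ind i d + ind b d)) + (ind b i + K i + K b)))"
  proof -
    have "ind a i + ind i a = 1" "ind d i + ind i d = 1" "ind a b + ind b a = 1" "ind d b + ind b d = 1"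
      using dist unfolding ind_def by auto
    then show ?thesis by presburger
  qed
  show ?thesis unfolding e1 e2 e3 e4 power_add[symmetric]
    by (rule minus_one_pow_parity) (use ev in \<open>simp add: algebra_simps\<close>)
qed

lemma sum_swap_diag:
  fixes F :: "nat \<Rightarrow> nat \<Rightarrow> complex"
  assumes "finite W"
  shows "(\<Sum>x\<in>W. \<Sum>y\<in>W-{x}. F x y) = (\<Sum>y\<in>W. \<Sum>x\<in>W-{y}. F x y)"
proof -
  have a: "(\<Sum>y\<in>W-{x}. F x y) = (\<Sum>y\<in>W. if y \<noteq> x then F x y else 0)" for x
  proof -
    have "W - {x} = {y\<in>W. y \<noteq> x}" by auto
    then show ?thesis by (simp add: sum.inter_filter[OF assms])
  qed
  have b: "(\<Sum>x\<in>W-{y}. F x y) = (\<Sum>x\<in>W. if y \<noteq> x then F x y else 0)" for y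
  proof -
    have "W - {y} = {x\<in>W. y \<noteq> x}" by auto
    then show ?thesis by (simp add: sum.inter_filter[OF assms])
  qed
  show ?thesis unfolding a b by (rule sum.swap)
qed



lemma pfn_row:
  assumes skew: "\<And>u v. A u v = - A v u"
  shows "finite I \<Longrightarrow> card I = 2 * Suc n \<Longrightarrow> a \<in> I \<Longrightarrow>
         pfn A (Suc n) I = (\<Sum>c\<in>I-{a}. pfeps a c I * A a c * pfn A n (I - {a,c}))"
proof (induction n arbitrary: I a rule: less_induct)
  case (less n I a)
  define i where "i = Min I"
  have finI: "finite I" and aI: "a \<in> I" using less.prems by auto
  have Ine: "I \<noteq> {}" using aI by auto
  have iI: "i \<in> I" unfolding i_def using finI Ine by simp
  have imin: "i \<le> u" if "u \<in> I" for u unfolding i_def using finI that by simp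
  have LHS0: "pfn A (Suc n) I = (\<Sum>b\<in>I-{i}. pfeps i b I * A i b * pfn A n (I - {i,b}))"
    unfolding i_def by simp
  show ?case
  proof (cases "a = i")
    case True
    then show ?thesis using LHS0 by simp
  next
    case False
    define W where "W = I - {i, a}"
    have finW: "finite W" unfolding W_def using finI by simp
    have cW: "card W = 2 * n"
    proof -
      have "card W = card I - card {i, a}" unfolding W_def using iI aI finI by (intro card_Diff_subset) auto
      then show ?thesis using False less.prems(2) by simp
    qed
    have LHS1: "pfn A (Suc n) I = pfeps i a I * A i a * pfn A n (I - {i,a})
                 + (\<Sum>b\<in>W. pfeps i b I * A i b * pfn A n (I - {i,b}))"
    proof -
      have "I - {i} - {a} = W" unfolding W_def by auto
      then show ?thesis unfolding LHS0 using aI False finI by (subst sum.remove[of _ a]) auto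
    qed
    have RHS1: "(\<Sum>c\<in>I-{a}. pfeps a c I * A a c * pfn A n (I - {a,c})) = pfeps a i I * A a i * pfn A n (I - {a,i})
                 + (\<Sum>c\<in>W. pfeps a c I * A a c * pfn A n (I - {a,c}))"
    proof -
      have "I - {a} - {i} = W" unfolding W_def by auto
      then show ?thesis using iI False finI by (subst sum.remove[of _ i]) auto
    qed
    have T: "pfeps i a I * A i a * pfn A n (I - {i,a}) = pfeps a i I * A a i * pfn A n (I - {a,i})"
    proof -
      have "I - {a,i} = I - {i,a}" by auto
      moreover have "pfeps a i I * A a i = pfeps i a I * A i a"
        using pfeps_swap[of i a I] skew[of a i] False by simp
      ultimately show ?thesis by simp
    qed
    have rest: "(\<Sum>b\<in>W. pfeps i b I * A i b * pfn A n (I - {i,b})) = (\<Sum>c\<in>W. pfeps a c I * A a c * pfn A n (I - {a,c}))"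
    proof (cases "W = {}")
      case True then show ?thesis by simp
    next
      case Wne: False
      then have "n \<noteq> 0" using cW finW by auto
      then obtain m where nm: "n = Suc m" by (cases n) auto
      have WI: "W \<subseteq> I" "i \<notin> W" "a \<notin> W" unfolding W_def by auto
      have Lb: "pfn A n (I - {i,b}) = (\<Sum>d\<in>W-{b}. pfeps a d (I - {i,b}) * A a d * pfn A m (W - {b,d}))"
        if b: "b \<in> W" for b
      proof -
        have "card (I - {i,b}) = 2 * Suc m"
        proof -
          have "card (I - {i,b}) = card I - card {i,b}" using iI b WI finI by (intro card_Diff_subset) auto
          moreover have "card {i,b} = 2" using b WI by (cases "i = b") auto
          ultimately show ?thesis using less.prems(2) nm by simp
        qed
        moreover have "a \<in> I - {i, b}" using aI False b WI by auto
        ultimately have "pfn A (Suc m) (I - {i,b}) = (\<Sum>d\<in>(I-{i,b})-{a}. pfeps a d (I - {i,b}) * A a d * pfn A m ((I - {i,b}) - {a,d}))"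
          using less.IH[of m "I - {i,b}" a] nm finI by simp
        moreover have "(I-{i,b})-{a} = W - {b}" unfolding W_def by auto
        moreover have "(I - {i,b}) - {a,d} = W - {b,d}" for d unfolding W_def by auto
        ultimately show ?thesis using nm by simp
      qed
      have Rc: "pfn A n (I - {a,c}) = (\<Sum>d\<in>W-{c}. pfeps i d (I - {a,c}) * A i d * pfn A m (W - {c,d}))"
        if c: "c \<in> W" for c
      proof -
        have mn: "Min (I - {a,c}) = i"
          by (rule Min_eqI) (use finI iI False c WI imin in auto)
        have "pfn A n (I - {a,c}) = (\<Sum>d\<in>(I - {a,c})-{i}. pfeps i d (I - {a,c}) * A i d * pfn A m ((I - {a,c}) - {i,d}))"
          unfolding nm by (simp add: mn)
        moreover have "(I - {a,c})-{i} = W - {c}" unfolding W_def by auto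
        moreover have "(I - {a,c}) - {i,d} = W - {c,d}" for d unfolding W_def by auto
        ultimately show ?thesis by simp
      qed
      have "(\<Sum>b\<in>W. pfeps i b I * A i b * pfn A n (I - {i,b}))
            = (\<Sum>b\<in>W. \<Sum>d\<in>W-{b}. (pfeps i b I * pfeps a d (I - {i,b})) * (A i b * A a d * pfn A m (W - {b,d})))"
        by (rule sum.cong[OF refl]) (simp add: Lb sum_distrib_left algebra_simps)
      also have "\<dots> = (\<Sum>b\<in>W. \<Sum>d\<in>W-{b}. (pfeps a d I * pfeps i b (I - {a,d})) * (A i b * A a d * pfn A m (W - {b,d})))"
      proof (intro sum.cong refl)
        fix b d assume b: "b \<in> W" and d: "d \<in> W - {b}"
        have "pfeps i b I * pfeps a d (I - {i,b}) = pfeps a d I * pfeps i b (I - {a,d})"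
          by (rule pfeps_four[OF finI iI aI]) (use b d WI False in auto)
        then show "(pfeps i b I * pfeps a d (I - {i,b})) * (A i b * A a d * pfn A m (W - {b,d}))
                 = (pfeps a d I * pfeps i b (I - {a,d})) * (A i b * A a d * pfn A m (W - {b,d}))" by simp
      qed
      also have "\<dots> = (\<Sum>d\<in>W. \<Sum>b\<in>W-{d}. (pfeps a d I * pfeps i b (I - {a,d})) * (A i b * A a d * pfn A m (W - {b,d})))"
        by (rule sum_swap_diag[OF finW])
      also have "\<dots> = (\<Sum>c\<in>W. pfeps a c I * A a c * pfn A n (I - {a,c}))"
      proof (rule sum.cong[OF refl])
        fix c assume c: "c \<in> W"
        have "W - {d,c} = W - {c,d}" for d by auto
        then show "(\<Sum>b\<in>W-{c}. (pfeps a c I * pfeps i b (I - {a,c})) * (A i b * A a c * pfn A m (W - {b,c})))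
                  = pfeps a c I * A a c * pfn A n (I - {a,c})"
          by (simp add: Rc[OF c] sum_distrib_left algebra_simps)
      qed
      finally show ?thesis .
    qed
    show ?thesis unfolding LHS1 RHS1 T rest ..
  qed
qed

lemma pfeps_image:
  assumes h: "strict_mono (h::nat\<Rightarrow>nat)"
  shows "pfeps (h a) (h c) (h ` I) = pfeps a c I"
proof -
  have inj: "inj h" using h by (rule strict_mono_imp_inj_on)
  have s: "{z\<in>h ` I - {h a, h c}. z < h t} = h ` {z\<in>I-{a,c}. z<t}" for t
  proof -
    have "h ` I - {h a, h c} = h ` (I - {a,c})" using inj by (simp add: image_set_diff)
    then show ?thesis by (auto simp: strict_mono_less[OF h])
  qed
  have c: "card {z\<in>h ` I - {h a, h c}. z < h t} = card {z\<in>I-{a,c}. z<t}" for t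
    unfolding s using inj by (simp add: card_image inj_on_subset)
  show ?thesis unfolding pfeps_def c using strict_mono_less[OF h] by simp
qed

lemma pfn_image:
  assumes h: "strict_mono (h::nat\<Rightarrow>nat)"
  shows "finite I \<Longrightarrow> pfn A n (h ` I) = pfn (\<lambda>u v. A (h u) (h v)) n I"
proof (induction n arbitrary: I)
  case 0 then show ?case by simp
next
  case (Suc n I)
  have inj: "inj h" using h by (rule strict_mono_imp_inj_on)
  show ?case
  proof (cases "I = {}")
    case True then show ?thesis by simp
  next
    case False
    define i where "i = Min I"
    have iI: "i \<in> I" unfolding i_def using Suc.prems False by simp
    have imin: "i \<le> u" if "u \<in> I" for u unfolding i_def using Suc.prems that by simp
    have mh: "Min (h ` I) = h i"
    proof (rule Min_eqI)
      show "finite (h ` I)" using Suc.prems by simp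
      show "h i \<in> h ` I" using iI by simp
      fix y assume "y \<in> h ` I"
      then obtain u where "u \<in> I" "y = h u" by auto
      then show "h i \<le> y" using imin strict_mono_less_eq[OF h] by simp
    qed
    have "pfn A (Suc n) (h ` I) = (\<Sum>j'\<in>h ` I - {h i}. pfeps (h i) j' (h ` I) * A (h i) j' * pfn A n (h ` I - {h i, j'}))"
      by (simp add: mh)
    also have "h ` I - {h i} = h ` (I - {i})" using inj by (simp add: image_set_diff)
    also have "(\<Sum>j'\<in>h ` (I - {i}). pfeps (h i) j' (h ` I) * A (h i) j' * pfn A n (h ` I - {h i, j'}))
             = (\<Sum>j\<in>I - {i}. pfeps (h i) (h j) (h ` I) * A (h i) (h j) * pfn A n (h ` I - {h i, h j}))"
      by (rule sum.reindex[unfolded comp_def]) (rule inj_on_subset[OF inj], simp)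
    also have "\<dots> = (\<Sum>j\<in>I - {i}. pfeps i j I * A (h i) (h j) * pfn (\<lambda>u v. A (h u) (h v)) n (I - {i, j}))"
    proof (rule sum.cong[OF refl])
      fix j assume "j \<in> I - {i}"
      have "h ` I - {h i, h j} = h ` (I - {i,j})" using inj by (simp add: image_set_diff)
      then have "pfn A n (h ` I - {h i, h j}) = pfn (\<lambda>u v. A (h u) (h v)) n (I - {i, j})"
        using Suc.IH[of "I - {i,j}"] Suc.prems by simp
      then show "pfeps (h i) (h j) (h ` I) * A (h i) (h j) * pfn A n (h ` I - {h i, h j})
               = pfeps i j I * A (h i) (h j) * pfn (\<lambda>u v. A (h u) (h v)) n (I - {i, j})"
        using pfeps_image[OF h] by simp
    qed
    also have "\<dots> = pfn (\<lambda>u v. A (h u) (h v)) (Suc n) I" unfolding i_def by simp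
    finally show ?thesis .
  qed
qed



definition pfins :: "nat \<Rightarrow> nat \<Rightarrow> nat" where "pfins a x = (if x < a then x else Suc x)"

lemma pfins_mono: "strict_mono (pfins a)"
  unfolding strict_mono_def pfins_def by auto

lemma pfins_image: "a \<le> N \<Longrightarrow> pfins a ` {..<N} = {..<Suc N} - {a}"
proof
  assume "a \<le> N"
  show "pfins a ` {..<N} \<subseteq> {..<Suc N} - {a}" unfolding pfins_def by auto
  show "{..<Suc N} - {a} \<subseteq> pfins a ` {..<N}"
  proof
    fix c assume c: "c \<in> {..<Suc N} - {a}"
    show "c \<in> pfins a ` {..<N}"
    proof (cases "c < a")
      case True
      then have "pfins a c = c" unfolding pfins_def by simp
      then show ?thesis using True \<open>a \<le> N\<close> by (metis image_eqI lessThan_iff order_less_le_trans)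
    next
      case False
      then have "c > a" using c by auto
      then have "pfins a (c - 1) = c" unfolding pfins_def by auto
      moreover have "c - 1 < N" using c \<open>c > a\<close> by auto
      ultimately show ?thesis by (metis image_eqI lessThan_iff)
    qed
  qed
qed

lemma pfeps_ins:
  assumes "a < N" "b < N - 1"
  shows "pfeps a (pfins a b) {..<N} = (-1) ^ (a + b)"
proof (cases "b < a")
  case True
  then have c: "pfins a b = b" unfolding pfins_def by simp
  have s1: "{z\<in>{..<N}-{a,b}. z<a} = {..<a} - {b}" using assms by auto
  have s2: "{z\<in>{..<N}-{a,b}. z<b} = {..<b}" using True assms by auto
  have "card ({..<a} - {b}) = a - 1" using True by simp
  then show ?thesis unfolding pfeps_def c s1 s2 using True by (simp add: algebra_simps)
next
  case False
  then have c: "pfins a b = Suc b" unfolding pfins_def by simp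
  have s1: "{z\<in>{..<N}-{a,Suc b}. z<a} = {..<a}" using False assms by auto
  have s2: "{z\<in>{..<N}-{a,Suc b}. z<Suc b} = {..<Suc b} - {a}" using assms by auto
  have "card ({..<Suc b} - {a}) = b" using False by simp
  then show ?thesis unfolding pfeps_def c s1 s2 using False by simp
qed

lemma B2_generic:
  fixes S :: "nat \<Rightarrow> (nat \<Rightarrow> nat \<Rightarrow> complex) \<Rightarrow> complex"
  assumes rec: "\<And>n A. S (Suc n) A = (\<Sum>a<Suc (Suc (2*n)). \<Sum>b<Suc (2*n). (-1)^(a+b) * A a (pfins a b) *
      S n (\<lambda>u v. A (pfins a (pfins b u)) (pfins a (pfins b v))))"
    and base: "\<And>A. S 0 A = 1"
  shows "(\<And>u v. A u v = - A v u) \<Longrightarrow> S n A = 2^n * fact n * pfn A n {..<2*n}"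
proof (induction n arbitrary: A)
  case 0 show ?case using base by simp
next
  case (Suc n A)
  define I where "I = {..<Suc (Suc (2*n))}"
  have finI: "finite I" unfolding I_def by simp
  have cI: "card I = 2 * Suc n" unfolding I_def by simp
  have inner: "(\<Sum>b<Suc (2*n). (-1)^(a+b) * A a (pfins a b) * S n (\<lambda>u v. A (pfins a (pfins b u)) (pfins a (pfins b v))))
        = 2^n * fact n * (\<Sum>c\<in>I-{a}. pfeps a c I * A a c * pfn A n (I - {a,c}))" if a: "a \<in> I" for a
  proof -
    have "(\<Sum>b<Suc (2*n). (-1)^(a+b) * A a (pfins a b) * S n (\<lambda>u v. A (pfins a (pfins b u)) (pfins a (pfins b v))))
        = (\<Sum>b<Suc (2*n). 2^n * fact n * (pfeps a (pfins a b) I * A a (pfins a b) * pfn A n (I - {a, pfins a b})))"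
    proof (rule sum.cong[OF refl])
      fix b assume b: "b \<in> {..<Suc (2*n)}"
      define h where "h = (\<lambda>u. pfins a (pfins b u))"
      have hm: "strict_mono h" unfolding h_def using pfins_mono by (simp add: strict_mono_def)
      have IH: "S n (\<lambda>u v. A (h u) (h v)) = 2^n * fact n * pfn (\<lambda>u v. A (h u) (h v)) n {..<2*n}"
        by (rule Suc.IH) (rule Suc.prems)
      have img: "h ` {..<2*n} = I - {a, pfins a b}"
      proof -
        have inj: "inj (pfins a)" by (rule strict_mono_imp_inj_on[OF pfins_mono])
        have i1: "pfins b ` {..<2*n} = {..<Suc (2*n)} - {b}" by (rule pfins_image) (use b in simp)
        have i2: "h ` {..<2*n} = pfins a ` (pfins b ` {..<2*n})" unfolding h_def by (rule image_image[symmetric])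
        have i3: "pfins a ` ({..<Suc (2*n)} - {b}) = pfins a ` {..<Suc (2*n)} - {pfins a b}"
          by (subst image_set_diff[OF inj]) simp
        have i4: "pfins a ` {..<Suc (2*n)} = I - {a}" unfolding I_def by (rule pfins_image) (use a in \<open>simp add: I_def\<close>)
        show ?thesis unfolding i2 i1 i3 i4 by auto
      qed
      have pi: "pfn (\<lambda>u v. A (h u) (h v)) n {..<2*n} = pfn A n (I - {a, pfins a b})"
        using pfn_image[OF hm, of "{..<2*n}" A n] img by simp
      have e: "pfeps a (pfins a b) I = (-1)^(a+b)"
        unfolding I_def by (rule pfeps_ins) (use a b I_def in auto)
      show "(-1)^(a+b) * A a (pfins a b) * S n (\<lambda>u v. A (pfins a (pfins b u)) (pfins a (pfins b v)))
          = 2^n * fact n * (pfeps a (pfins a b) I * A a (pfins a b) * pfn A n (I - {a, pfins a b}))"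
        using IH pi e unfolding h_def by simp
    qed
    also have "\<dots> = 2^n * fact n * (\<Sum>b<Suc (2*n). pfeps a (pfins a b) I * A a (pfins a b) * pfn A n (I - {a, pfins a b}))"
      by (rule sum_distrib_left[symmetric])
    also have "(\<Sum>b<Suc (2*n). pfeps a (pfins a b) I * A a (pfins a b) * pfn A n (I - {a, pfins a b}))
             = (\<Sum>c\<in>pfins a ` {..<Suc (2*n)}. pfeps a c I * A a c * pfn A n (I - {a, c}))"
      by (rule sum.reindex[unfolded comp_def, symmetric]) (rule strict_mono_imp_inj_on[OF pfins_mono])
    also have "pfins a ` {..<Suc (2*n)} = I - {a}" unfolding I_def using a I_def by (intro pfins_image) simp
    finally show ?thesis .
  qed
  have "S (Suc n) A = (\<Sum>a\<in>I. 2^n * fact n * (\<Sum>c\<in>I-{a}. pfeps a c I * A a c * pfn A n (I - {a,c})))"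
    unfolding rec I_def[symmetric] using inner by (rule sum.cong[OF refl])
  also have "\<dots> = (\<Sum>a\<in>I. 2^n * fact n * pfn A (Suc n) I)"
  proof (rule sum.cong[OF refl])
    fix a assume aI: "a \<in> I"
    show "2^n * fact n * (\<Sum>c\<in>I-{a}. pfeps a c I * A a c * pfn A n (I - {a,c})) = 2^n * fact n * pfn A (Suc n) I"
      using pfn_row[where A=A, OF Suc.prems, OF finI cI aI] by simp
  qed
  also have "\<dots> = 2^Suc n * fact (Suc n) * pfn A (Suc n) I"
    using cI by (simp add: algebra_simps)
  finally show ?case unfolding I_def by simp
qed



lemma pfn_cong_upper:
  assumes "\<And>u v. u < v \<Longrightarrow> A u v = A' u v"
  shows "finite I \<Longrightarrow> pfn A n I = pfn A' n I"
proof (induction n arbitrary: I)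
  case 0 then show ?case by simp
next
  case (Suc n I)
  show ?case
  proof (cases "I = {}")
    case True then show ?thesis by simp
  next
    case False
    have hh: "pfeps (Min I) j I * A (Min I) j * pfn A n (I - {Min I, j}) = pfeps (Min I) j I * A' (Min I) j * pfn A' n (I - {Min I, j})"
      if j: "j \<in> I - {Min I}" for j
    proof -
      have "Min I \<le> j" using Suc.prems j by simp
      then have "Min I < j" using j by auto
      then have "A (Min I) j = A' (Min I) j" by (rule assms)
      moreover have "pfn A n (I - {Min I, j}) = pfn A' n (I - {Min I, j})" using Suc.IH Suc.prems by simp
      ultimately show ?thesis by simp
    qed
    show ?thesis unfolding pfn.simps by (rule sum.cong[OF refl], rule hh)
  qed
qed

lemma prod_blk: "1 \<le> k \<Longrightarrow> (\<Prod>u\<in>pfblk k. F u) = F (2*k-1) * F (2*k)"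
  unfolding pfblk_def by simp

lemma block_prod:
  fixes x :: "nat \<Rightarrow> complex" and f :: "nat \<Rightarrow> nat \<Rightarrow> complex"
  assumes finT: "finite T" and T1: "T \<subseteq> {k. 1 \<le> k}"
  shows "(\<Prod>u\<in>\<Union>(pfblk ` T). x u) * pfpp f (\<Union>(pfblk ` T))
       = (\<Prod>k\<in>T. x (2*k-1) * x (2*k) * f (2*k-1) (2*k)) *
         (\<Prod>j\<in>T. \<Prod>k\<in>{k\<in>T. j<k}. f (2*j-1) (2*k-1) * f (2*j-1) (2*k) * f (2*j) (2*k-1) * f (2*j) (2*k))"
proof -
  define U where "U = \<Union>(pfblk ` T)"
  define G where "G = (\<lambda>u v. if u < v then f u v else 1)"
  define Q where "Q = (\<lambda>j k. \<Prod>u\<in>pfblk j. \<Prod>v\<in>pfblk k. G u v)"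
  define cr where "cr = (\<lambda>j k. f (2*j-1) (2*k-1) * f (2*j-1) (2*k) * f (2*j) (2*k-1) * f (2*j) (2*k))"
  have finb: "finite (pfblk k)" for k unfolding pfblk_def by simp
  have finU: "finite U" unfolding U_def using finT finb by simp
  have disj: "\<forall>j\<in>T. \<forall>k\<in>T. j \<noteq> k \<longrightarrow> pfblk j \<inter> pfblk k = {}" using T1 pfblk_disj by auto
  have UN: "(\<Prod>u\<in>U. F u) = (\<Prod>k\<in>T. \<Prod>u\<in>pfblk k. F u)" for F :: "nat \<Rightarrow> complex"
    unfolding U_def by (rule prod.UNION_disjoint[OF finT]) (use finb disj in auto)
  have X: "(\<Prod>u\<in>U. x u) = (\<Prod>k\<in>T. x (2*k-1) * x (2*k))"
    unfolding UN using T1 by (intro prod.cong refl) (auto simp: prod_blk)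
  have pp1: "pfpp f U = (\<Prod>u\<in>U. \<Prod>v\<in>U. G u v)"
    unfolding pfpp_def G_def
  proof (rule prod.cong[OF refl])
    fix u assume "u \<in> U"
    show "(\<Prod>v\<in>{v\<in>U. u<v}. f u v) = (\<Prod>v\<in>U. if u < v then f u v else 1)"
      by (rule prod.inter_filter[OF finU])
  qed
  also have "\<dots> = (\<Prod>j\<in>T. \<Prod>u\<in>pfblk j. \<Prod>k\<in>T. \<Prod>v\<in>pfblk k. G u v)"
    unfolding UN ..
  also have "\<dots> = (\<Prod>j\<in>T. \<Prod>k\<in>T. Q j k)"
    unfolding Q_def by (rule prod.cong[OF refl], rule prod.swap)
  also have "\<dots> = (\<Prod>j\<in>T. f (2*j-1) (2*j) * (\<Prod>k\<in>{k\<in>T. j<k}. cr j k))"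
  proof (rule prod.cong[OF refl])
    fix j assume j: "j \<in> T"
    then have j1: "1 \<le> j" using T1 by auto
    have Qjj: "Q j j = f (2*j-1) (2*j)"
      unfolding Q_def G_def using j1 by (simp add: prod_blk)
    have Qjk: "Q j k = (if j < k then cr j k else 1)" if k: "k \<in> T - {j}" for k
    proof -
      have k1: "1 \<le> k" using k T1 by auto
      show ?thesis
      proof (cases "j < k")
        case True
        have ie: "2*j-1 < 2*k-1" "2*j-1 < 2*k" "2*j < 2*k-1" "2*j < 2*k" using True j1 by auto
        show ?thesis unfolding Q_def G_def cr_def using j1 k1 True ie by (simp add: prod_blk)
      next
        case False
        then have kj: "k < j" using k by auto
        have ie: "\<not> 2*j-1 < 2*k-1" "\<not> 2*j-1 < 2*k" "\<not> 2*j < 2*k-1" "\<not> 2*j < 2*k" using kj k1 by auto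
        show ?thesis unfolding Q_def G_def cr_def using j1 k1 False ie by (simp add: prod_blk)
      qed
    qed
    have "(\<Prod>k\<in>T. Q j k) = Q j j * (\<Prod>k\<in>T-{j}. Q j k)"
      using j finT by (simp add: prod.remove)
    also have "(\<Prod>k\<in>T-{j}. Q j k) = (\<Prod>k\<in>T-{j}. if j < k then cr j k else 1)"
      using Qjk by (rule prod.cong[OF refl])
    also have "\<dots> = (\<Prod>k\<in>{k\<in>T-{j}. j<k}. cr j k)"
      by (rule prod.inter_filter[symmetric]) (use finT in simp)
    also have "{k\<in>T-{j}. j<k} = {k\<in>T. j<k}" by auto
    finally show "(\<Prod>k\<in>T. Q j k) = f (2*j-1) (2*j) * (\<Prod>k\<in>{k\<in>T. j<k}. cr j k)" using Qjj by simp
  qed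
  finally have "pfpp f U = (\<Prod>j\<in>T. f (2*j-1) (2*j)) * (\<Prod>j\<in>T. \<Prod>k\<in>{k\<in>T. j<k}. cr j k)"
    by (simp add: prod.distrib)
  then show ?thesis unfolding U_def[symmetric] X cr_def by (simp add: prod.distrib algebra_simps)
qed



lemma pfblk_iff: "1 \<le> u \<Longrightarrow> u \<in> pfblk k \<longleftrightarrow> k = (u + 1) div 2"
  unfolding pfblk_mem by presburger

lemma UN_blk_mem: "1 \<le> u \<Longrightarrow> u \<in> \<Union>(pfblk ` S) \<longleftrightarrow> (u + 1) div 2 \<in> S"
  using pfblk_iff by auto

lemma pfPI_interval: "pfPI {1..2*g} = {1..g}"
  unfolding pfPI_def pfblk_def by auto

lemma complement_blocks:
  assumes "S \<subseteq> {1..g}"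
  shows "{1..2*g} - \<Union>(pfblk ` S) = \<Union>(pfblk ` ({1..g} - S))"
proof
  show "{1..2*g} - \<Union>(pfblk ` S) \<subseteq> \<Union>(pfblk ` ({1..g} - S))"
  proof
    fix u assume u: "u \<in> {1..2*g} - \<Union>(pfblk ` S)"
    then have u1: "1 \<le> u" "u \<le> 2*g" by auto
    have "(u + 1) div 2 \<notin> S" using u UN_blk_mem[OF u1(1)] by auto
    moreover have "(u + 1) div 2 \<in> {1..g}" using u1 by auto
    ultimately show "u \<in> \<Union>(pfblk ` ({1..g} - S))" using UN_blk_mem[OF u1(1)] by auto
  qed
  show "\<Union>(pfblk ` ({1..g} - S)) \<subseteq> {1..2*g} - \<Union>(pfblk ` S)"
  proof
    fix u assume u: "u \<in> \<Union>(pfblk ` ({1..g} - S))"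
    then obtain k where k: "k \<in> {1..g} - S" "u \<in> pfblk k" by auto
    then have u1: "1 \<le> u" "u \<le> 2*g" unfolding pfblk_def by auto
    have "(u + 1) div 2 = k" using pfblk_iff[OF u1(1)] k by simp
    then show "u \<in> {1..2*g} - \<Union>(pfblk ` S)" using UN_blk_mem[OF u1(1), of S] k u1 by auto
  qed
qed

lemma qseq_odd: "1 \<le> k \<Longrightarrow> qseq b c (2*k - 1) = b k"
  unfolding qseq_def by (simp add: odd_pos)

lemma qseq_even: "qseq b c (2*k) = - c k"
  unfolding qseq_def by simp

lemma q_props:
  assumes A1: "\<And>j k. j \<in> {1..g} \<Longrightarrow> k \<in> {1..g} \<Longrightarrow> j \<noteq> k \<Longrightarrow>
             b j - b k \<noteq> 0 \<and> b j + b k \<noteq> 0 \<and> c j - c k \<noteq> 0 \<and> c j + c k \<noteq> 0"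
      and A2: "\<And>j k. j \<in> {1..g} \<Longrightarrow> k \<in> {1..g} \<Longrightarrow> b j - c k \<noteq> 0 \<and> b j + c k \<noteq> 0"
      and u: "u \<in> {1..2*g}" and v: "v \<in> {1..2*g}" and uv: "u \<noteq> v"
  shows "qseq b c u \<noteq> qseq b c v \<and> qseq b c u + qseq b c v \<noteq> 0"
proof -
  define j where "j = (if odd u then (u+1) div 2 else u div 2)"
  define k where "k = (if odd v then (v+1) div 2 else v div 2)"
  have u1: "1 \<le> u" "u \<le> 2*g" and v1: "1 \<le> v" "v \<le> 2*g" using u v by auto
  have j: "j \<in> {1..g}"
  proof (cases "odd u")
    case True then show ?thesis unfolding j_def using u1 by simp presburger
  next
    case False then show ?thesis unfolding j_def using u1 by simp presburger
  qed
  have k: "k \<in> {1..g}"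
  proof (cases "odd v")
    case True then show ?thesis unfolding k_def using v1 by simp presburger
  next
    case False then show ?thesis unfolding k_def using v1 by simp presburger
  qed
  have qu: "qseq b c u = (if odd u then b j else - c j)" unfolding qseq_def j_def by simp
  have qv: "qseq b c v = (if odd v then b k else - c k)" unfolding qseq_def k_def by simp
  show ?thesis
  proof (cases "odd u")
    case ou: True
    show ?thesis
    proof (cases "odd v")
      case True
      have "j \<noteq> k"
      proof
        assume "j = k"
        then have "(u+1) div 2 = (v+1) div 2" using ou True unfolding j_def k_def by simp
        then show False using ou True uv by presburger
      qed
      then have h: "b j - b k \<noteq> 0" "b j + b k \<noteq> 0" using A1[OF j k] by auto
      have "qseq b c u = b j" "qseq b c v = b k" using qu qv ou True by auto
      then show ?thesis using h by simp
    next
      case False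
      have h: "b j - c k \<noteq> 0" "b j + c k \<noteq> 0" using A2[OF j k] by auto
      have "qseq b c u = b j" "qseq b c v = - c k" using qu qv ou False by auto
      then show ?thesis using h by (metis add_uminus_conv_diff diff_minus_eq_add eq_iff_diff_eq_0)
    qed
  next
    case eu: False
    show ?thesis
    proof (cases "odd v")
      case True
      have h: "b k - c j \<noteq> 0" "b k + c j \<noteq> 0" using A2[OF k j] by auto
      have "qseq b c u = - c j" "qseq b c v = b k" using qu qv eu True by auto
      then show ?thesis using h by (metis add.commute add_uminus_conv_diff diff_minus_eq_add eq_iff_diff_eq_0)
    next
      case False
      have "j \<noteq> k"
      proof
        assume "j = k"
        then have "u div 2 = v div 2" using eu False unfolding j_def k_def by simp
        then show False using eu False uv by presburger
      qed
      then have h: "c j - c k \<noteq> 0" "c j + c k \<noteq> 0" using A1[OF j k] by auto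
      have "qseq b c u = - c j" "qseq b c v = - c k" using qu qv eu False by auto
      then show ?thesis using h by (metis add.inverse_distrib_swap minus_diff_eq neg_equal_iff_equal eq_iff_diff_eq_0 neg_0_equal_iff_equal add.commute)
    qed
  qed
qed



lemma main_pfn:
  fixes g :: nat and b c :: "nat \<Rightarrow> complex" and \<xi> :: "nat \<Rightarrow> complex"
  assumes A1: "\<And>j k. j \<in> {1..g} \<Longrightarrow> k \<in> {1..g} \<Longrightarrow> j \<noteq> k \<Longrightarrow>
             b j - b k \<noteq> 0 \<and> b j + b k \<noteq> 0 \<and> c j - c k \<noteq> 0 \<and> c j + c k \<noteq> 0"
      and A2: "\<And>j k. j \<in> {1..g} \<Longrightarrow> k \<in> {1..g} \<Longrightarrow> b j - c k \<noteq> 0 \<and> b j + c k \<noteq> 0"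
  shows "(\<Sum>m \<in> {1..g} \<rightarrow>\<^sub>E {0, 1}.
            (\<Prod>(j, k) \<in> {(j, k). 1 \<le> j \<and> j < k \<and> k \<le> g}. CB b c j k ^ (m j * m k)) *
            (\<Prod>k = 1..g. (exp (\<xi> (2*k - 1) + \<xi> (2*k)) * (b k + c k) / (b k - c k)) ^ m k))
       = pfn (skew_from_upper (\<lambda>j k. cconst j k +
            (qseq b c j - qseq b c k) / (qseq b c j + qseq b c k) * exp (\<xi> j + \<xi> k))) g {1..2*g}"
proof -
  define q where "q = qseq b c"
  define x where "x = (\<lambda>u. exp (\<xi> u))"
  define f where "f = (\<lambda>u v. (q u - q v) / (q u + q v))"
  define D where "D = (\<lambda>u v. x u * x v * f u v)"
  define w where "w = (\<lambda>k. exp (\<xi> (2*k - 1) + \<xi> (2*k)) * (b k + c k) / (b k - c k))"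
  define \<Phi> where "\<Phi> = (\<lambda>T. (\<Prod>k\<in>T. w k) * (\<Prod>j\<in>T. \<Prod>k\<in>{k\<in>T. j<k}. CB b c j k))"
  define G where "G = {1..g}"
  have stepA: "pfn (skew_from_upper (\<lambda>j k. cconst j k +
            (qseq b c j - qseq b c k) / (qseq b c j + qseq b c k) * exp (\<xi> j + \<xi> k))) g {1..2*g}
      = pfn (\<lambda>u v. D u v + pfBm u v) g {1..2*g}"
  proof (rule pfn_cong_upper)
    fix u v :: nat assume "u < v"
    then show "skew_from_upper (\<lambda>j k. cconst j k +
            (qseq b c j - qseq b c k) / (qseq b c j + qseq b c k) * exp (\<xi> j + \<xi> k)) u v = D u v + pfBm u v"
      unfolding skew_from_upper_def D_def x_def f_def q_def cconst_def pfBm_def by (simp add: exp_add algebra_simps)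
  qed simp
  have stepB: "pfn (\<lambda>u v. D u v + pfBm u v) g {1..2*g}
      = (\<Sum>S\<in>Pow G. pfn D (g - card S) ({1..2*g} - \<Union>(pfblk ` S)))"
    using pf_sum[of "{1..2*g}" g D] unfolding pfPI_interval G_def by simp
  have qp: "q u \<noteq> q v \<and> q u + q v \<noteq> 0" if "u \<in> {1..2*g}" "v \<in> {1..2*g}" "u \<noteq> v" for u v
    unfolding q_def by (rule q_props[OF A1 A2 that])
  have trm: "pfn D (g - card S) ({1..2*g} - \<Union>(pfblk ` S)) = \<Phi> (G - S)" if S: "S \<in> Pow G" for S
  proof -
    define T where "T = G - S"
    define U where "U = \<Union>(pfblk ` T)"
    have SG: "S \<subseteq> {1..g}" using S unfolding G_def by simp
    have TG: "T \<subseteq> {1..g}" unfolding T_def G_def by auto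
    have finT: "finite T" using TG finite_subset by blast
    have T1: "T \<subseteq> {k. 1 \<le> k}" using TG by auto
    have cU: "card U = 2 * card T" unfolding U_def by (rule card_UN_blk[OF finT T1])
    have cT: "card T = g - card S" unfolding T_def G_def using SG by (simp add: card_Diff_subset finite_subset)
    have eqU: "{1..2*g} - \<Union>(pfblk ` S) = U" unfolding U_def T_def G_def by (rule complement_blocks[OF SG])
    have finU: "finite U" unfolding U_def using finT by (simp add: pfblk_def)
    have Usub: "U \<subseteq> {1..2*g}"
    proof
      fix u assume "u \<in> U"
      then obtain k where k: "k \<in> T" "u \<in> pfblk k" unfolding U_def by auto
      then have "1 \<le> k" "k \<le> g" using TG by auto
      then show "u \<in> {1..2*g}" using k(2) unfolding pfblk_def by auto
    qed
    have injU: "inj_on q U"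
    proof (rule inj_onI)
      fix u v assume "u \<in> U" "v \<in> U" "q u = q v"
      then show "u = v" using qp Usub by blast
    qed
    have sU: "\<forall>u\<in>U. \<forall>v\<in>U. u \<noteq> v \<longrightarrow> q u + q v \<noteq> 0" using qp Usub by blast
    have "pfn D (g - card S) U = (\<Prod>u\<in>U. x u) * pfpp f U"
      unfolding D_def f_def using schur[OF finU _ injU sU, of "card T" x] cU cT by simp
    also have "\<dots> = (\<Prod>k\<in>T. x (2*k-1) * x (2*k) * f (2*k-1) (2*k)) *
         (\<Prod>j\<in>T. \<Prod>k\<in>{k\<in>T. j<k}. f (2*j-1) (2*k-1) * f (2*j-1) (2*k) * f (2*j) (2*k-1) * f (2*j) (2*k))"
      unfolding U_def by (rule block_prod[OF finT T1])
    also have "\<dots> = \<Phi> T"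
    proof -
      have w: "x (2*k-1) * x (2*k) * f (2*k-1) (2*k) = w k" if "k \<in> T" for k
      proof -
        have k1: "1 \<le> k" using that T1 by auto
        have "q (2*k-1) = b k" unfolding q_def by (rule qseq_odd[OF k1])
        moreover have "q (2*k) = - c k" unfolding q_def by (rule qseq_even)
        ultimately
        show ?thesis unfolding x_def f_def w_def by (simp add: exp_add)
      qed
      have cr: "f (2*j-1) (2*k-1) * f (2*j-1) (2*k) * f (2*j) (2*k-1) * f (2*j) (2*k) = CB b c j k"
        if "j \<in> T" "k \<in> T" "j < k" for j k
      proof -
        have j1: "1 \<le> j" and k1: "1 \<le> k" using that T1 by auto
        have jg: "j \<in> {1..g}" and kg: "k \<in> {1..g}" using that TG by auto
        have qv: "q (2*j-1) = b j" "q (2*j) = - c j" "q (2*k-1) = b k" "q (2*k) = - c k"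
          unfolding q_def by (rule qseq_odd[OF j1], rule qseq_even, rule qseq_odd[OF k1], rule qseq_even)
        have a1: "- c j - b k = - (c j + b k)" "- c j + b k = - (c j - b k)"
                 "- c j - - c k = - (c j - c k)" "- c j + - c k = - (c j + c k)"
                 "b j - - c k = b j + c k" "b j + - c k = b j - c k" by simp_all
        have "f (2*j-1) (2*k-1) * f (2*j-1) (2*k) * f (2*j) (2*k-1) * f (2*j) (2*k)
            = (b j - b k) / (b j + b k) * ((b j + c k) / (b j - c k)) * ((c j + b k) / (c j - b k)) * ((c j - c k) / (c j + c k))"
          unfolding f_def qv a1 minus_divide_divide ..
        also have "\<dots> = ((b j - b k) * (b j + c k) * (c j + b k) * (c j - c k)) / ((b j + b k) * (b j - c k) * (c j - b k) * (c j + c k))"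
          by (simp only: times_divide_times_eq)
        also have "\<dots> = CB b c j k" unfolding CB_def by (simp only: ac_simps)
        finally show ?thesis .
      qed
      have e1: "(\<Prod>k\<in>T. x (2*k-1) * x (2*k) * f (2*k-1) (2*k)) = (\<Prod>k\<in>T. w k)"
        by (rule prod.cong[OF refl]) (rule w)
      have e2: "(\<Prod>j\<in>T. \<Prod>k\<in>{k\<in>T. j<k}. f (2*j-1) (2*k-1) * f (2*j-1) (2*k) * f (2*j) (2*k-1) * f (2*j) (2*k))
              = (\<Prod>j\<in>T. \<Prod>k\<in>{k\<in>T. j<k}. CB b c j k)"
      proof (rule prod.cong[OF refl], rule prod.cong[OF refl])
        fix j k assume "j \<in> T" "k \<in> {k\<in>T. j<k}"
        then show "f (2*j-1) (2*k-1) * f (2*j-1) (2*k) * f (2*j) (2*k-1) * f (2*j) (2*k) = CB b c j k"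
          using cr by simp
      qed
      show ?thesis unfolding \<Phi>_def e1 e2 ..
    qed
    finally show ?thesis unfolding eqU T_def .
  qed
  have stepC: "(\<Sum>S\<in>Pow G. pfn D (g - card S) ({1..2*g} - \<Union>(pfblk ` S))) = (\<Sum>T\<in>Pow G. \<Phi> T)"
  proof -
    have "(\<Sum>S\<in>Pow G. pfn D (g - card S) ({1..2*g} - \<Union>(pfblk ` S))) = (\<Sum>S\<in>Pow G. \<Phi> (G - S))"
      using trm by (rule sum.cong[OF refl])
    also have "\<dots> = (\<Sum>T\<in>Pow G. \<Phi> T)"
    proof (rule sum.reindex_bij_witness[where i="\<lambda>S. G - S" and j="\<lambda>S. G - S"])
      fix S assume "S \<in> Pow G"
      then have "S \<subseteq> G" by simp
      then show "G - (G - S) = S" "G - S \<in> Pow G" by auto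
      show "\<Phi> (G - S) = \<Phi> (G - S)" ..
    qed auto
    finally show ?thesis .
  qed
  have stepD: "(\<Sum>m \<in> {1..g} \<rightarrow>\<^sub>E {0, 1}.
            (\<Prod>(j, k) \<in> {(j, k). 1 \<le> j \<and> j < k \<and> k \<le> g}. CB b c j k ^ (m j * m k)) *
            (\<Prod>k = 1..g. (exp (\<xi> (2*k - 1) + \<xi> (2*k)) * (b k + c k) / (b k - c k)) ^ m k))
        = (\<Sum>T\<in>Pow G. \<Phi> T)"
  proof (rule sum.reindex_bij_witness[where j="\<lambda>m. {k\<in>G. m k = 1}"
            and i="\<lambda>T k. if k \<in> G then (if k \<in> T then 1 else 0) else undefined"])
    fix m :: "nat \<Rightarrow> nat" assume m: "m \<in> {1..g} \<rightarrow>\<^sub>E {0, 1}"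
    have m01: "m k = 0 \<or> m k = 1" if "k \<in> G" for k using m that unfolding G_def by auto
    have mu: "m k = undefined" if "k \<notin> G" for k using m that unfolding G_def by auto
    show "(\<lambda>k. if k \<in> G then (if k \<in> {k\<in>G. m k = 1} then 1 else 0) else undefined) = m"
    proof
      fix k show "(if k \<in> G then (if k \<in> {k\<in>G. m k = 1} then 1 else 0) else undefined) = m k"
        using m01[of k] mu[of k] by auto
    qed
    show "{k\<in>G. m k = 1} \<in> Pow G" by auto
    define T where "T = {k\<in>G. m k = 1}"
    have TG: "T \<subseteq> G" unfolding T_def by auto
    have finG: "finite G" unfolding G_def by simp
    have mT: "m k = (if k \<in> T then 1 else 0)" if "k \<in> G" for k
      using m01[OF that] that unfolding T_def by auto
    have W: "(\<Prod>k = 1..g. (exp (\<xi> (2*k - 1) + \<xi> (2*k)) * (b k + c k) / (b k - c k)) ^ m k) = (\<Prod>k\<in>T. w k)"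
    proof -
      have "(\<Prod>k = 1..g. (exp (\<xi> (2*k - 1) + \<xi> (2*k)) * (b k + c k) / (b k - c k)) ^ m k)
          = (\<Prod>k\<in>G. if k \<in> T then w k else 1)"
        unfolding G_def[symmetric] w_def by (rule prod.cong[OF refl]) (simp add: mT)
      also have "\<dots> = (\<Prod>k\<in>{k\<in>G. k \<in> T}. w k)" by (rule prod.inter_filter[symmetric, OF finG])
      also have "{k\<in>G. k \<in> T} = T" using TG by auto
      finally show ?thesis .
    qed
    have P: "(\<Prod>(j, k) \<in> {(j, k). 1 \<le> j \<and> j < k \<and> k \<le> g}. CB b c j k ^ (m j * m k))
           = (\<Prod>j\<in>T. \<Prod>k\<in>{k\<in>T. j<k}. CB b c j k)"
    proof -
      have sig: "{(j, k). 1 \<le> j \<and> j < k \<and> k \<le> g} = (SIGMA j:G. {k\<in>G. j<k})" unfolding G_def by auto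
      have "(\<Prod>(j, k) \<in> {(j, k). 1 \<le> j \<and> j < k \<and> k \<le> g}. CB b c j k ^ (m j * m k))
          = (\<Prod>j\<in>G. \<Prod>k\<in>{k\<in>G. j<k}. CB b c j k ^ (m j * m k))"
        unfolding sig by (rule prod.Sigma[symmetric]) (use finG in auto)
      also have "\<dots> = (\<Prod>j\<in>G. if j \<in> T then (\<Prod>k\<in>{k\<in>T. j<k}. CB b c j k) else 1)"
      proof (rule prod.cong[OF refl])
        fix j assume jG: "j \<in> G"
        show "(\<Prod>k\<in>{k\<in>G. j<k}. CB b c j k ^ (m j * m k)) = (if j \<in> T then (\<Prod>k\<in>{k\<in>T. j<k}. CB b c j k) else 1)"
        proof (cases "j \<in> T")
          case True
          have "(\<Prod>k\<in>{k\<in>G. j<k}. CB b c j k ^ (m j * m k)) = (\<Prod>k\<in>{k\<in>G. j<k}. if k \<in> T then CB b c j k else 1)"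
            by (rule prod.cong[OF refl]) (use True jG mT in auto)
          also have "\<dots> = (\<Prod>k\<in>{k\<in>{k\<in>G. j<k}. k \<in> T}. CB b c j k)"
            by (rule prod.inter_filter[symmetric]) (use finG in simp)
          also have "{k\<in>{k\<in>G. j<k}. k \<in> T} = {k\<in>T. j<k}" using TG by auto
          finally show ?thesis using True by simp
        next
          case False
          have "(\<Prod>k\<in>{k\<in>G. j<k}. CB b c j k ^ (m j * m k)) = (\<Prod>k\<in>{k\<in>G. j<k}. 1)"
            by (rule prod.cong[OF refl]) (use False jG mT in auto)
          then show ?thesis using False by simp
        qed
      qed
      also have "\<dots> = (\<Prod>j\<in>{j\<in>G. j \<in> T}. \<Prod>k\<in>{k\<in>T. j<k}. CB b c j k)"
        by (rule prod.inter_filter[symmetric, OF finG])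
      also have "{j\<in>G. j \<in> T} = T" using TG by auto
      finally show ?thesis .
    qed
    show "\<Phi> {k\<in>G. m k = 1} =
          (\<Prod>(j, k) \<in> {(j, k). 1 \<le> j \<and> j < k \<and> k \<le> g}. CB b c j k ^ (m j * m k)) *
          (\<Prod>k = 1..g. (exp (\<xi> (2*k - 1) + \<xi> (2*k)) * (b k + c k) / (b k - c k)) ^ m k)"
      unfolding T_def[symmetric] P W \<Phi>_def by simp
  next
    fix T :: "nat set" assume "T \<in> Pow G"
    then have TG: "T \<subseteq> G" by simp
    show "{k\<in>G. (if k \<in> G then (if k \<in> T then 1 else 0) else undefined) = (1::nat)} = T" using TG by auto
    show "(\<lambda>k. if k \<in> G then (if k \<in> T then 1 else 0) else undefined) \<in> {1..g} \<rightarrow>\<^sub>E {0, 1}"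
      unfolding G_def by auto
  qed
  show ?thesis unfolding stepA stepB stepC stepD ..
qed



definition pfS0 :: "nat \<Rightarrow> (nat \<Rightarrow> nat \<Rightarrow> complex) \<Rightarrow> complex" where
  "pfS0 n A = (\<Sum>\<sigma> | \<sigma> permutes {0..<2*n}. of_int (sign \<sigma>) * (\<Prod>k<n. A (\<sigma> (2*k)) (\<sigma> (2*k+1))))"

lemma pins0: fixes a x :: nat and q :: "nat \<Rightarrow> nat" shows "permutation_insert 0 a q x = (if x = 0 then a else insert_index a (q (x - 1)))"
  unfolding permutation_insert_expand by auto

lemma sum_perm_split:
  fixes F :: "(nat \<Rightarrow> nat) \<Rightarrow> complex"
  shows "(\<Sum>\<sigma> | \<sigma> permutes {0..<Suc N}. F \<sigma>) = (\<Sum>a<Suc N. \<Sum>q | q permutes {0..<N}. F (permutation_insert 0 a q))"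
proof -
  define T where "T = (\<lambda>a. permutation_insert 0 a ` {q. q permutes {0..<N}})"
  have e: "{\<sigma>. \<sigma> permutes {0..<Suc N}} = (\<Union>a\<in>{..<Suc N}. T a)"
  proof
    show "{\<sigma>. \<sigma> permutes {0..<Suc N}} \<subseteq> (\<Union>a\<in>{..<Suc N}. T a)"
    proof
      fix \<sigma> assume "\<sigma> \<in> {\<sigma>. \<sigma> permutes {0..<Suc N}}"
      then have p: "\<sigma> permutes {0..<Suc N}" by simp
      then have a: "\<sigma> 0 < Suc N" using permutes_in_image[OF p, of 0] by simp
      have "\<sigma> \<in> {p. p permutes {0..<Suc N} \<and> p 0 = \<sigma> 0}" using p by simp
      then have "\<sigma> \<in> T (\<sigma> 0)" unfolding T_def using permutation_fix[of 0 N "\<sigma> 0"] a by simp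
      then show "\<sigma> \<in> (\<Union>a\<in>{..<Suc N}. T a)" using a by auto
    qed
    show "(\<Union>a\<in>{..<Suc N}. T a) \<subseteq> {\<sigma>. \<sigma> permutes {0..<Suc N}}"
    proof
      fix \<sigma> assume "\<sigma> \<in> (\<Union>a\<in>{..<Suc N}. T a)"
      then obtain a where a: "a < Suc N" "\<sigma> \<in> T a" by auto
      then show "\<sigma> \<in> {\<sigma>. \<sigma> permutes {0..<Suc N}}"
        unfolding T_def using permutation_fix[of 0 N a] by auto
    qed
  qed
  have "(\<Sum>\<sigma> | \<sigma> permutes {0..<Suc N}. F \<sigma>) = (\<Sum>a<Suc N. \<Sum>\<sigma>\<in>T a. F \<sigma>)"
    unfolding e
  proof (rule sum.UNION_disjoint)
    show "finite {..<Suc N}" by simp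
    show "\<forall>a\<in>{..<Suc N}. finite (T a)" unfolding T_def by (simp add: finite_permutations)
    show "\<forall>a\<in>{..<Suc N}. \<forall>b\<in>{..<Suc N}. a \<noteq> b \<longrightarrow> T a \<inter> T b = {}"
      unfolding T_def by auto (metis permutation_insert_inserted)
  qed
  also have "\<dots> = (\<Sum>a<Suc N. \<Sum>q | q permutes {0..<N}. F (permutation_insert 0 a q))"
  proof (rule sum.cong[OF refl])
    fix a assume "a \<in> {..<Suc N}"
    then have inj: "inj_on (permutation_insert 0 a) {q. q permutes {0..<N}}"
      by (intro permutation_insert_inj_on) auto
    show "(\<Sum>\<sigma>\<in>T a. F \<sigma>) = (\<Sum>q | q permutes {0..<N}. F (permutation_insert 0 a q))"
      unfolding T_def by (rule sum.reindex[OF inj, unfolded comp_def])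
  qed
  finally show ?thesis .
qed

lemma pfS0_rec:
  "pfS0 (Suc n) A = (\<Sum>a<Suc (Suc (2*n)). \<Sum>b<Suc (2*n). (-1)^(a+b) * A a (insert_index a b) *
      pfS0 n (\<lambda>u v. A (insert_index a (insert_index b u)) (insert_index a (insert_index b v))))"
proof -
  define F where "F = (\<lambda>\<sigma>. of_int (sign \<sigma>) * (\<Prod>k<Suc n. A (\<sigma> (2*k)) (\<sigma> (2*k+1))) :: complex)"
  have "pfS0 (Suc n) A = (\<Sum>\<sigma> | \<sigma> permutes {0..<Suc (Suc (2*n))}. F \<sigma>)"
    unfolding pfS0_def F_def by simp
  also have "\<dots> = (\<Sum>a<Suc (Suc (2*n)). \<Sum>q | q permutes {0..<Suc (2*n)}. F (permutation_insert 0 a q))"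
    by (rule sum_perm_split)
  also have "\<dots> = (\<Sum>a<Suc (Suc (2*n)). \<Sum>b<Suc (2*n). \<Sum>r | r permutes {0..<2*n}.
                     F (permutation_insert 0 a (permutation_insert 0 b r)))"
    by (rule sum.cong[OF refl], rule sum_perm_split)
  also have "\<dots> = (\<Sum>a<Suc (Suc (2*n)). \<Sum>b<Suc (2*n). (-1)^(a+b) * A a (insert_index a b) *
      pfS0 n (\<lambda>u v. A (insert_index a (insert_index b u)) (insert_index a (insert_index b v))))"
  proof (intro sum.cong refl)
    fix a b assume a: "a \<in> {..<Suc (Suc (2*n))}" and b: "b \<in> {..<Suc (2*n)}"
    define h where "h = (\<lambda>u. insert_index a (insert_index b u))"
    have "(\<Sum>r | r permutes {0..<2*n}. F (permutation_insert 0 a (permutation_insert 0 b r)))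
        = (\<Sum>r | r permutes {0..<2*n}. (-1)^(a+b) * A a (insert_index a b) *
             (of_int (sign r) * (\<Prod>k<n. A (h (r (2*k))) (h (r (2*k+1))))))"
    proof (rule sum.cong[OF refl])
      fix r assume "r \<in> {r. r permutes {0..<2*n}}"
      then have r: "r permutes {0..<2*n}" by simp
      have q: "permutation_insert 0 b r permutes {0..<Suc (2*n)}"
        using permutation_insert_permutes[OF r, of 0 b] b by simp
      have s1: "(signof (permutation_insert 0 b r) :: complex) = (-1)^(0+b) * signof r"
        using signof_permutation_insert[OF r, of 0 b] b by simp
      have s2: "(signof (permutation_insert 0 a (permutation_insert 0 b r)) :: complex)
                = (-1)^(0+a) * signof (permutation_insert 0 b r)"
        using signof_permutation_insert[OF q, of 0 a] a by simp
      have p: "(\<Prod>k<Suc n. A (permutation_insert 0 a (permutation_insert 0 b r) (2*k))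
                             (permutation_insert 0 a (permutation_insert 0 b r) (2*k+1)))
             = A a (insert_index a b) * (\<Prod>k<n. A (h (r (2*k))) (h (r (2*k+1))))"
        unfolding prod.lessThan_Suc_shift by (simp add: pins0 h_def)
      show "F (permutation_insert 0 a (permutation_insert 0 b r)) = (-1)^(a+b) * A a (insert_index a b) *
             (of_int (sign r) * (\<Prod>k<n. A (h (r (2*k))) (h (r (2*k+1)))))"
        unfolding F_def p using s1 s2 by (simp add: power_add algebra_simps)
    qed
    also have "\<dots> = (-1)^(a+b) * A a (insert_index a b) * pfS0 n (\<lambda>u v. A (h u) (h v))"
      unfolding pfS0_def by (simp add: sum_distrib_left)
    finally show "(\<Sum>r | r permutes {0..<2*n}. F (permutation_insert 0 a (permutation_insert 0 b r)))
       = (-1)^(a+b) * A a (insert_index a b) *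
      pfS0 n (\<lambda>u v. A (insert_index a (insert_index b u)) (insert_index a (insert_index b v)))"
      by (simp add: h_def)
  qed
  finally show ?thesis .
qed

lemma shift_perm_sum:
  fixes A :: "nat \<Rightarrow> nat \<Rightarrow> complex"
  shows "(\<Sum>\<sigma> | \<sigma> permutes {1..2*n}. of_int (sign \<sigma>) * (\<Prod>i=1..n. A (\<sigma> (2*i - 1)) (\<sigma> (2*i))))
         = pfS0 n (\<lambda>u v. A (Suc u) (Suc v))"
proof -
  define N where "N = 2*n"
  define \<rho> where "\<rho> = (\<lambda>x::nat. if x < N then Suc x else if x = N then 0 else x)"
  define \<rho>' where "\<rho>' = (\<lambda>x::nat. if x = 0 then N else if x \<le> N then x - 1 else x)"
  have rr1: "\<rho>' (\<rho> x) = x" for x unfolding \<rho>_def \<rho>'_def by auto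
  have rr2: "\<rho> (\<rho>' x) = x" for x unfolding \<rho>_def \<rho>'_def by auto
  have pr: "\<rho> permutes {0..N}"
  proof (rule bij_imp_permutes)
    show "bij_betw \<rho> {0..N} {0..N}"
      by (rule bij_betw_byWitness[where f'=\<rho>']) (auto simp: rr1 rr2, auto simp: \<rho>_def \<rho>'_def)
    show "\<And>x. x \<notin> {0..N} \<Longrightarrow> \<rho> x = x" unfolding \<rho>_def by auto
  qed
  have pr': "\<rho>' permutes {0..N}"
  proof (rule bij_imp_permutes)
    show "bij_betw \<rho>' {0..N} {0..N}"
      by (rule bij_betw_byWitness[where f'=\<rho>]) (auto simp: rr1 rr2, auto simp: \<rho>_def \<rho>'_def)
    show "\<And>x. x \<notin> {0..N} \<Longrightarrow> \<rho>' x = x" unfolding \<rho>'_def by auto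
  qed
  have permr: "permutation \<rho>" "permutation \<rho>'"
    using pr pr' by (auto intro: permutes_imp_permutation)
  have srr: "sign \<rho>' * sign \<rho> = 1"
  proof -
    have "\<rho>' \<circ> \<rho> = id" using rr1 by auto
    then have "sign (\<rho>' \<circ> \<rho>) = 1" by simp
    then show ?thesis using sign_compose[OF permr(2) permr(1)] by simp
  qed
  have conj_sign: "sign (\<rho>' \<circ> \<sigma> \<circ> \<rho>) = sign \<sigma>" if "permutation \<sigma>" for \<sigma>
  proof -
    have "sign (\<rho>' \<circ> \<sigma> \<circ> \<rho>) = sign \<rho>' * (sign \<sigma> * sign \<rho>)"
      using that permr by (simp add: sign_compose permutation_compose o_assoc[symmetric])
    then show ?thesis using srr by (simp add: algebra_simps)
  qed
  show ?thesis
    unfolding pfS0_def N_def[symmetric]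
  proof (rule sum.reindex_bij_witness[where j="\<lambda>\<sigma>. \<rho>' \<circ> \<sigma> \<circ> \<rho>" and i="\<lambda>\<tau>. \<rho> \<circ> \<tau> \<circ> \<rho>'"])
    fix \<sigma> assume "\<sigma> \<in> {\<sigma>. \<sigma> permutes {1..N}}"
    then have s: "\<sigma> permutes {1..N}" by simp
    show "\<rho> \<circ> (\<rho>' \<circ> \<sigma> \<circ> \<rho>) \<circ> \<rho>' = \<sigma>" using rr1 rr2 by (auto simp: fun_eq_iff)
    have s0: "\<sigma> permutes {0..N}" by (rule permutes_subset[OF s]) auto
    have P1: "\<rho>' \<circ> \<sigma> \<circ> \<rho> permutes {0..N}"
      by (intro permutes_compose pr pr' s0)
    have P2: "(\<rho>' \<circ> \<sigma> \<circ> \<rho>) N = N"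
    proof -
      have "\<sigma> 0 = 0" using permutes_not_in[OF s] by simp
      then show ?thesis unfolding \<rho>_def \<rho>'_def by simp
    qed
    have "\<rho>' \<circ> \<sigma> \<circ> \<rho> permutes {0..<N}"
      by (rule permutes_superset[OF P1]) (use P2 in auto)
    then show "\<rho>' \<circ> \<sigma> \<circ> \<rho> \<in> {\<tau>. \<tau> permutes {0..<N}}" by simp
    have perm: "permutation \<sigma>" using s by (auto intro: permutes_imp_permutation)
    have val: "\<rho>' (\<sigma> (\<rho> x)) = \<sigma> (Suc x) - 1" if "x < N" for x
    proof -
      have "\<sigma> (Suc x) \<in> {1..N}" using permutes_in_image[OF s, of "Suc x"] that by simp
      then show ?thesis unfolding \<rho>_def \<rho>'_def using that by auto
    qed
    have valp: "Suc (\<rho>' (\<sigma> (\<rho> x))) = \<sigma> (Suc x)" if "x < N" for x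
    proof -
      have "\<sigma> (Suc x) \<in> {1..N}" using permutes_in_image[OF s, of "Suc x"] that by simp
      then show ?thesis using val[OF that] by simp
    qed
    have "(\<Prod>k<n. A (Suc ((\<rho>' \<circ> \<sigma> \<circ> \<rho>) (2*k))) (Suc ((\<rho>' \<circ> \<sigma> \<circ> \<rho>) (2*k+1))))
          = (\<Prod>k<n. A (\<sigma> (Suc (2*k))) (\<sigma> (Suc (2*k+1))))"
    proof (rule prod.cong[OF refl])
      fix k assume "k \<in> {..<n}"
      then have "2*k < N" "2*k+1 < N" by (auto simp: N_def)
      then show "A (Suc ((\<rho>' \<circ> \<sigma> \<circ> \<rho>) (2*k))) (Suc ((\<rho>' \<circ> \<sigma> \<circ> \<rho>) (2*k+1)))
          = A (\<sigma> (Suc (2*k))) (\<sigma> (Suc (2*k+1)))" using valp by simp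
    qed
    also have "\<dots> = (\<Prod>i=1..n. A (\<sigma> (2*i - 1)) (\<sigma> (2*i)))"
    proof -
      have "(\<Prod>i\<in>Suc ` {..<n}. A (\<sigma> (2*i - 1)) (\<sigma> (2*i))) = (\<Prod>k<n. A (\<sigma> (2*Suc k - 1)) (\<sigma> (2*Suc k)))"
        by (rule prod.reindex[unfolded comp_def]) simp
      then show ?thesis by (simp add: image_Suc_lessThan)
    qed
    finally show "of_int (sign (\<rho>' \<circ> \<sigma> \<circ> \<rho>)) *
          (\<Prod>k<n. A (Suc ((\<rho>' \<circ> \<sigma> \<circ> \<rho>) (2*k))) (Suc ((\<rho>' \<circ> \<sigma> \<circ> \<rho>) (2*k+1))))
          = of_int (sign \<sigma>) * (\<Prod>i=1..n. A (\<sigma> (2*i - 1)) (\<sigma> (2*i)))"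
      using conj_sign[OF perm] by simp
  next
    fix \<tau> assume "\<tau> \<in> {\<tau>. \<tau> permutes {0..<N}}"
    then have t: "\<tau> permutes {0..<N}" by simp
    show "\<rho>' \<circ> (\<rho> \<circ> \<tau> \<circ> \<rho>') \<circ> \<rho> = \<tau>" using rr1 rr2 by (auto simp: fun_eq_iff)
    have t0: "\<tau> permutes {0..N}" by (rule permutes_subset[OF t]) auto
    have P1: "\<rho> \<circ> \<tau> \<circ> \<rho>' permutes {0..N}"
      by (intro permutes_compose pr pr' t0)
    have P2: "(\<rho> \<circ> \<tau> \<circ> \<rho>') 0 = 0"
    proof -
      have "\<tau> N = N" using permutes_not_in[OF t] by simp
      then show ?thesis unfolding \<rho>_def \<rho>'_def by simp
    qed
    have "\<rho> \<circ> \<tau> \<circ> \<rho>' permutes {1..N}"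
    proof (rule permutes_superset[OF P1])
      fix x assume "x \<in> {0..N} - {1..N}"
      then have "x = 0" by auto
      then show "(\<rho> \<circ> \<tau> \<circ> \<rho>') x = x" using P2 by simp
    qed
    then show "\<rho> \<circ> \<tau> \<circ> \<rho>' \<in> {\<sigma>. \<sigma> permutes {1..N}}" by simp
  qed
qed


lemma pfS0_zero: "pfS0 0 A = 1"
proof -
  have "{\<sigma>::nat\<Rightarrow>nat. \<sigma> permutes {0..<2*(0::nat)}} = {id}" by simp
  then show ?thesis unfolding pfS0_def by simp
qed

lemma insert_index_pfins: "insert_index = pfins"
  by (intro ext) (simp add: insert_index_def pfins_def)

lemma pfaffian_pfn:
  assumes skew: "\<And>u v. A u v = - A v u"
  shows "pfaffian n A = pfn A n {1..2*n}"
proof -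
  define A1 where "A1 = (\<lambda>u v. A (Suc u) (Suc v))"
  have skew1: "\<And>u v. A1 u v = - A1 v u" unfolding A1_def by (rule skew)
  have rec: "\<And>n A. pfS0 (Suc n) A = (\<Sum>a<Suc (Suc (2*n)). \<Sum>b<Suc (2*n). (-1)^(a+b) * A a (pfins a b) *
      pfS0 n (\<lambda>u v. A (pfins a (pfins b u)) (pfins a (pfins b v))))"
    using pfS0_rec unfolding insert_index_pfins by simp
  have B2: "pfS0 n A1 = 2^n * fact n * pfn A1 n {..<2*n}"
    by (rule B2_generic[OF rec pfS0_zero skew1])
  have img: "pfn A1 n {..<2*n} = pfn A n {1..2*n}"
  proof -
    have "pfn A n (Suc ` {..<2*n}) = pfn (\<lambda>u v. A (Suc u) (Suc v)) n {..<2*n}"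
      by (rule pfn_image) (auto simp: strict_mono_Suc_iff)
    then show ?thesis unfolding A1_def by (simp add: image_Suc_lessThan)
  qed
  have "pfaffian n A = pfS0 n A1 / (2 ^ n * fact n)"
    unfolding pfaffian_def A1_def shift_perm_sum ..
  also have "\<dots> = pfn A n {1..2*n}" unfolding B2 img by simp
  finally show ?thesis .
qed

lemma skew_from_upper_skew: "skew_from_upper E u v = - skew_from_upper E v u"
  unfolding skew_from_upper_def by auto

theorem mainTheorem3:
  fixes g :: nat and b c :: "nat \<Rightarrow> complex" and \<xi> :: "nat \<Rightarrow> complex"
  assumes "\<And>j k. j \<in> {1..g} \<Longrightarrow> k \<in> {1..g} \<Longrightarrow> j \<noteq> k \<Longrightarrow>
             b j - b k \<noteq> 0 \<and> b j + b k \<noteq> 0 \<and> c j - c k \<noteq> 0 \<and> c j + c k \<noteq> 0"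
      and "\<And>j k. j \<in> {1..g} \<Longrightarrow> k \<in> {1..g} \<Longrightarrow> b j - c k \<noteq> 0 \<and> b j + c k \<noteq> 0"
  shows "(\<Sum>m \<in> {1..g} \<rightarrow>\<^sub>E {0, 1}.
            (\<Prod>(j, k) \<in> {(j, k). 1 \<le> j \<and> j < k \<and> k \<le> g}. CB b c j k ^ (m j * m k)) *
            (\<Prod>k = 1..g. (exp (\<xi> (2*k - 1) + \<xi> (2*k)) * (b k + c k) / (b k - c k)) ^ m k))
       = pfaffian g (skew_from_upper (\<lambda>j k. cconst j k +
            (qseq b c j - qseq b c k) / (qseq b c j + qseq b c k) * exp (\<xi> j + \<xi> k)))"
proof -
  have "pfaffian g (skew_from_upper (\<lambda>j k. cconst j k +
            (qseq b c j - qseq b c k) / (qseq b c j + qseq b c k) * exp (\<xi> j + \<xi> k)))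
     = pfn (skew_from_upper (\<lambda>j k. cconst j k +
            (qseq b c j - qseq b c k) / (qseq b c j + qseq b c k) * exp (\<xi> j + \<xi> k))) g {1..2*g}"
    by (rule pfaffian_pfn) (rule skew_from_upper_skew)
  then show ?thesis using main_pfn[OF assms] by simp
qed

end
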